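(* Let $m>a\geq 0$, $n>b\geq0$, $h\geq 0$ be integers with $h\leq (m-a)(n-b)-\max\{m-a,n-b\}$. Then $$\mathbb{E}^{\max}_{m\times n}(a,b,h)=\{\mathcal{E}'\cup\mathcal{I}\ \mid\ \mathcal{E}'\in\mathbb{E}^{\max}_{m\times n}(a,b,0),\ \mathcal{I}\subset([m]\times[n])\setminus\mathcal{E}',\ |\mathcal{I}|=h\},$$ i.e., every maximal correctable erasure pattern of $T_{m\times n}(a,b,h)$ is obtained by adding $h$ erasures to some maximal correctable pattern of $T_{m\times n}(a,b,0)$, and every such set is a maximal correctable pattern of $T_{m\times n}(a,b,h)$.
   Context: Positions of vectors in $\mathbb{F}^{mn}$ are identified with the grid $[m]\times[n]$, where $[k]=\{1,\dots,k\}$. For linear codes $\mathcal{C}_1\subseteq\mathbb{F}^m$, $\mathcal{C}_2\subseteq\mathbb{F}^n$ with generator matrices $\mathbf{G}_1,\mathbf{G}_2$, $\mathcal{C}_1\otimes\mathcal{C}_2$ is the row span of the Kronecker product $\mathbf{G}_1\otimes\mathbf{G}_2$. A code for the topology $T_{m\times n}(a,b,h)$ is a linear code over a finite field $\mathbb{F}$ with a parity-check matrix $\begin{pmatrix}\mathbf{H}_{\mathsf{local}}\\ \mathbf{H}_{\mathsf{global}}\end{pmatrix}$, where $\mathbf{H}_{\mathsf{local}}$ is a parity-check matrix of $\mathcal{C}_{\mathsf{col}}\otimes\mathcal{C}_{\mathsf{row}}$ for some linear $[m,\geq m-a]$ code $\mathcal{C}_{\mathsf{col}}$ and $[n,\geq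 n-b]$ code $\mathcal{C}_{\mathsf{row}}$ over $\mathbb{F}$, and $\mathbf{H}_{\mathsf{global}}$ is an arbitrary $h\times mn$ matrix over $\mathbb{F}$; $\mathbb{C}_{m\times n}(a,b,h)$ is the set of all such codes (over any finite field). A code corrects an erasure pattern $\mathcal{E}\subseteq[m]\times[n]$ if no two distinct codewords agree on all positions outside $\mathcal{E}$. $\mathcal{E}$ is correctable in $T_{m\times n}(a,b,h)$ if some code in $\mathbb{C}_{m\times n}(a,b,h)$ corrects it; $\mathbb{E}_{m\times n}(a,b,h)$ is the set of such patterns and $\mathbb{E}^{\max}_{m\times n}(a,b,h)$ the set of correctable patterns not properly contained in another correctable pattern. *)

theory Defs
  imports "HOL-Algebra.Ring"
begin

text \<open>Finite fields are represented as HOL-Algebra fields whose carrier is a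
finite set of natural numbers (every finite field is isomorphic to such a one).\<close>

definition vecs :: "nat ring \<Rightarrow> 'i set \<Rightarrow> ('i \<Rightarrow> nat) set" where
  "vecs R I = {v. (\<forall>i\<in>I. v i \<in> carrier R) \<and> (\<forall>i. i \<notin> I \<longrightarrow> v i = \<zero>\<^bsub>R\<^esub>)}"

definition lin_comb :: "nat ring \<Rightarrow> nat list \<Rightarrow> ('i \<Rightarrow> nat) list \<Rightarrow> 'i \<Rightarrow> nat" where
  "lin_comb R cs vs = (\<lambda>p. \<Oplus>\<^bsub>R\<^esub>k\<in>{..<length vs}. cs ! k \<otimes>\<^bsub>R\<^esub> (vs ! k) p)"

definition is_subspace :: "nat ring \<Rightarrow> 'i set \<Rightarrow> ('i \<Rightarrow> nat) set \<Rightarrow> bool" where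
  "is_subspace R I C \<longleftrightarrow> C \<subseteq> vecs R I \<and> (\<lambda>_. \<zero>\<^bsub>R\<^esub>) \<in> C
     \<and> (\<forall>u\<in>C. \<forall>v\<in>C. (\<lambda>i. u i \<oplus>\<^bsub>R\<^esub> v i) \<in> C)
     \<and> (\<forall>c\<in>carrier R. \<forall>v\<in>C. (\<lambda>i. c \<otimes>\<^bsub>R\<^esub> v i) \<in> C)"

definition lin_indep :: "nat ring \<Rightarrow> ('i \<Rightarrow> nat) list \<Rightarrow> bool" where
  "lin_indep R vs \<longleftrightarrow> (\<forall>cs. length cs = length vs \<and> set cs \<subseteq> carrier R
      \<and> lin_comb R cs vs = (\<lambda>_. \<zero>\<^bsub>R\<^esub>) \<longrightarrow> (\<forall>k<length vs. cs ! k = \<zero>\<^bsub>R\<^esub>))"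

definition dim_ge :: "nat ring \<Rightarrow> ('i \<Rightarrow> nat) set \<Rightarrow> nat \<Rightarrow> bool" where
  "dim_ge R C k \<longleftrightarrow> (\<exists>vs. length vs = k \<and> set vs \<subseteq> C \<and> lin_indep R vs)"

definition lin_code :: "nat ring \<Rightarrow> 'i set \<Rightarrow> nat \<Rightarrow> ('i \<Rightarrow> nat) set \<Rightarrow> bool" where
  "lin_code R I k C \<longleftrightarrow> is_subspace R I C \<and> dim_ge R C k"

definition span_of :: "nat ring \<Rightarrow> ('i \<Rightarrow> nat) set \<Rightarrow> ('i \<Rightarrow> nat) set" where
  "span_of R S = {lin_comb R cs vs | cs vs. set vs \<subseteq> S \<and> length cs = length vs \<and> set cs \<subseteq> carrier R}"

text \<open>tensor product code: span of all u \<otimes> v with (u \<otimes> v)(i,j) = u_i v_j,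
  which equals the row span of the Kronecker product of generator matrices\<close>
definition tensor_code :: "nat ring \<Rightarrow> (nat \<Rightarrow> nat) set \<Rightarrow> (nat \<Rightarrow> nat) set \<Rightarrow> (nat \<times> nat \<Rightarrow> nat) set" where
  "tensor_code R C1 C2 = span_of R {(\<lambda>(i,j). u i \<otimes>\<^bsub>R\<^esub> v j) | u v. u \<in> C1 \<and> v \<in> C2}"

definition grid :: "nat \<Rightarrow> nat \<Rightarrow> (nat \<times> nat) set" where
  "grid m n = {1..m} \<times> {1..n}"

text \<open>C is a code for topology T_{m\<times>n}(a,b,h) over R: the kernel of
  (H_local; H_global), i.e. (C_col \<otimes> C_row) \<inter> ker H_global, where the h rows of
  H_global are given by g 0, ..., g (h-1).\<close>
definition topo_code :: "nat ring \<Rightarrow> nat \<Rightarrow> nat \<Rightarrow> nat \<Rightarrow> nat \<Rightarrow> nat \<Rightarrow> (nat \<times> nat \<Rightarrow> nat) set \<Rightarrow> bool" where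
  "topo_code R m n a b h C \<longleftrightarrow>
     (\<exists>Ccol Crow g. lin_code R {1..m} (m - a) Ccol \<and> lin_code R {1..n} (n - b) Crow
        \<and> (\<forall>k<h. \<forall>p\<in>grid m n. g k p \<in> carrier R)
        \<and> C = {x \<in> tensor_code R Ccol Crow.
                 \<forall>k<h. (\<Oplus>\<^bsub>R\<^esub>p\<in>grid m n. g k p \<otimes>\<^bsub>R\<^esub> x p) = \<zero>\<^bsub>R\<^esub>})"

definition corrects :: "(nat \<times> nat \<Rightarrow> nat) set \<Rightarrow> nat \<Rightarrow> nat \<Rightarrow> (nat \<times> nat) set \<Rightarrow> bool" where
  "corrects C m n E \<longleftrightarrow> (\<forall>x\<in>C. \<forall>y\<in>C. (\<forall>p\<in>grid m n - E. x p = y p) \<longrightarrow> x = y)"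

definition correctable :: "nat \<Rightarrow> nat \<Rightarrow> nat \<Rightarrow> nat \<Rightarrow> nat \<Rightarrow> (nat \<times> nat) set \<Rightarrow> bool" where
  "correctable m n a b h E \<longleftrightarrow> E \<subseteq> grid m n \<and>
     (\<exists>R::nat ring. field R \<and> finite (carrier R) \<and>
        (\<exists>C. topo_code R m n a b h C \<and> corrects C m n E))"

definition max_correctable :: "nat \<Rightarrow> nat \<Rightarrow> nat \<Rightarrow> nat \<Rightarrow> nat \<Rightarrow> (nat \<times> nat) set \<Rightarrow> bool" where
  "max_correctable m n a b h E \<longleftrightarrow> correctable m n a b h E \<and>
     \<not> (\<exists>E'. correctable m n a b h E' \<and> E \<subset> E')"

end

theory Submission imports Defs "HOL-Library.FuncSet" begin

definition corr' :: "'i set \<Rightarrow> ('i \<Rightarrow> nat) set \<Rightarrow> 'i set \<Rightarrow> bool" where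
  "corr' G V E \<longleftrightarrow> (\<forall>x\<in>V. \<forall>y\<in>V. (\<forall>p\<in>G-E. x p = y p) \<longrightarrow> x = y)"

lemma finite_maximal_superset:
  assumes "finite G" "S \<subseteq> G" "Q S"
  shows "\<exists>T. S \<subseteq> T \<and> T \<subseteq> G \<and> Q T \<and> (\<forall>T'. T \<subset> T' \<longrightarrow> T' \<subseteq> G \<longrightarrow> \<not> Q T')"
proof -
  define F where "F = {T. S \<subseteq> T \<and> T \<subseteq> G \<and> Q T}"
  have "F \<subseteq> Pow G" unfolding F_def by auto
  then have fin: "finite F" using assms(1) finite_subset by blast
  have ne: "S \<in> F" using assms unfolding F_def by auto
  have "Max (card ` F) \<in> card ` F" using fin ne by (intro Max_in) auto
  then obtain T where T: "T \<in> F" "card T = Max (card ` F)" by auto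
  have "\<not> Q T'" if "T \<subset> T'" "T' \<subseteq> G" for T'
  proof
    assume "Q T'"
    then have "T' \<in> F" using T(1) that unfolding F_def by auto
    then have "card T' \<le> card T" using T(2) fin by simp
    moreover have "finite T'" using that(2) assms(1) finite_subset by blast
    then have "card T < card T'" using psubset_card_mono that(1) by blast
    ultimately show False by simp
  qed
  then show ?thesis using T(1) unfolding F_def by blast
qed

lemma finite_grid: "finite (grid m n)"
  unfolding grid_def by simp

locale FF = field R for R :: "nat ring" (structure) +
  assumes finR: "finite (carrier R)"
begin

abbreviation "q \<equiv> card (carrier R)"

lemma q_ge2: "2 \<le> q"
proof -
  have "{\<zero>, \<one>} \<subseteq> carrier R" by simp
  then have "card {\<zero>, \<one>} \<le> q" by (rule card_mono[OF finR])
  moreover have "card {\<zero>, \<one>} = 2" using zero_not_one by simp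
  ultimately show ?thesis by linarith
qed

lemma vecs_carrier: "v \<in> vecs R G \<Longrightarrow> v p \<in> carrier R"
  unfolding vecs_def by (cases "p \<in> G") auto

lemma vecs_subspace: "is_subspace R G (vecs R G)"
  unfolding is_subspace_def vecs_def by auto

lemma vecs_finite: assumes "finite G" shows "finite (vecs R G)"
proof (rule inj_on_finite[where f="\<lambda>x. restrict x G"])
  show "inj_on (\<lambda>x. restrict x G) (vecs R G)"
  proof (rule inj_onI)
    fix x y assume "x \<in> vecs R G" "y \<in> vecs R G" "restrict x G = restrict y G"
    show "x = y"
    proof
      fix i show "x i = y i"
      proof (cases "i \<in> G")
        case True then show ?thesis using fun_cong[OF \<open>restrict x G = restrict y G\<close>, of i] by simp
      next
        case False then show ?thesis using \<open>x \<in> vecs R G\<close> \<open>y \<in> vecs R G\<close> unfolding vecs_def by simp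
      qed
    qed
  qed
  show "(\<lambda>x. restrict x G) ` vecs R G \<subseteq> (\<Pi>\<^sub>E i\<in>G. carrier R)"
    unfolding vecs_def by auto
  show "finite (\<Pi>\<^sub>E i\<in>G. carrier R)" using assms finR by (simp add: finite_PiE)
qed

lemma corr_card:
  assumes "finite G" "V \<subseteq> vecs R G" "corr' G V E"
  shows "card V \<le> q ^ card (G - E)"
proof -
  have "card V \<le> card (\<Pi>\<^sub>E i\<in>G-E. carrier R)"
  proof (rule card_inj_on_le[where f="\<lambda>x. restrict x (G-E)"])
    show "inj_on (\<lambda>x. restrict x (G - E)) V"
    proof (rule inj_onI)
      fix x y assume "x \<in> V" "y \<in> V" "restrict x (G-E) = restrict y (G-E)"
      have "\<forall>p\<in>G-E. x p = y p"
      proof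
        fix p assume "p \<in> G-E"
        then show "x p = y p" using fun_cong[OF \<open>restrict x (G-E) = restrict y (G-E)\<close>, of p] by simp
      qed
      then show "x = y" using assms(3) \<open>x \<in> V\<close> \<open>y \<in> V\<close> unfolding corr'_def by blast
    qed
    show "(\<lambda>x. restrict x (G - E)) ` V \<subseteq> (\<Pi>\<^sub>E i\<in>G-E. carrier R)"
    proof
      fix w assume "w \<in> (\<lambda>x. restrict x (G - E)) ` V"
      then obtain x where "x \<in> V" "w = restrict x (G - E)" by blast
      then have "x \<in> vecs R G" using assms(2) by blast
      then show "w \<in> (\<Pi>\<^sub>E i\<in>G-E. carrier R)" using \<open>w = _\<close> by (simp add: restrict_PiE_iff vecs_carrier)
    qed
    show "finite (\<Pi>\<^sub>E i\<in>G-E. carrier R)" using assms finR by (simp add: finite_PiE)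
  qed
  also have "\<dots> = q ^ card (G - E)" using assms(1) by (simp add: card_PiE)
  finally show ?thesis .
qed

definition cvec :: "('i \<Rightarrow> nat) \<Rightarrow> bool" where "cvec v \<longleftrightarrow> (\<forall>p. v p \<in> carrier R)"

lemma lin_comb_Nil: "lin_comb R [] [] = (\<lambda>_. \<zero>)"
  unfolding lin_comb_def by simp

lemma cvec_vecs: "v \<in> vecs R G \<Longrightarrow> cvec v"
  by (simp add: cvec_def vecs_carrier)

lemma nth_carrier: "set cs \<subseteq> carrier R \<Longrightarrow> k < length cs \<Longrightarrow> cs ! k \<in> carrier R"
  using nth_mem by blast

lemma finsum_lessThan_Suc0:
  assumes "\<And>k. k < Suc n \<Longrightarrow> f k \<in> carrier R"
  shows "(\<Oplus>k\<in>{..<Suc n}. f k) = f 0 \<oplus> (\<Oplus>k\<in>{..<n}. f (Suc k))"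
proof -
  have e: "{..<Suc n} = insert 0 (Suc ` {..<n})" by (auto simp: image_iff less_Suc_eq_0_disj)
  have "(\<Oplus>k\<in>{..<Suc n}. f k) = f 0 \<oplus> (\<Oplus>k\<in>Suc ` {..<n}. f k)"
    unfolding e using assms by (subst finsum_insert) auto
  also have "(\<Oplus>k\<in>Suc ` {..<n}. f k) = (\<Oplus>k\<in>{..<n}. f (Suc k))"
    using assms by (subst finsum_reindex) auto
  finally show ?thesis .
qed

lemma lin_comb_carrier:
  assumes "set cs \<subseteq> carrier R" "\<forall>w\<in>set vs. cvec w" "length cs = length vs"
  shows "lin_comb R cs vs p \<in> carrier R"
  unfolding lin_comb_def using assms
  by (intro finsum_closed) (auto simp: cvec_def intro!: nth_carrier)

lemma lin_comb_Cons:
  assumes "c \<in> carrier R" "set cs \<subseteq> carrier R" "cvec v" "\<forall>w\<in>set vs. cvec w" "length cs = length vs"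
  shows "lin_comb R (c#cs) (v#vs) p = c \<otimes> v p \<oplus> lin_comb R cs vs p"
proof -
  have "lin_comb R (c#cs) (v#vs) p = (\<Oplus>k\<in>{..<Suc (length vs)}. (c#cs)!k \<otimes> ((v#vs)!k) p)"
    by (simp add: lin_comb_def)
  also have "\<dots> = (c#cs)!0 \<otimes> ((v#vs)!0) p \<oplus> (\<Oplus>k\<in>{..<length vs}. (c#cs)!(Suc k) \<otimes> ((v#vs)!(Suc k)) p)"
  proof (rule finsum_lessThan_Suc0)
    fix k assume "k < Suc (length vs)"
    then show "(c#cs)!k \<otimes> ((v#vs)!k) p \<in> carrier R"
      using assms by (cases k) (auto simp: cvec_def intro!: nth_carrier)
  qed
  also have "\<dots> = c \<otimes> v p \<oplus> lin_comb R cs vs p" by (simp add: lin_comb_def)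
  finally show ?thesis .
qed

lemma lin_comb_append:
  assumes "set cs1 \<subseteq> carrier R" "\<forall>w\<in>set vs1. cvec w" "length cs1 = length vs1"
    "set cs2 \<subseteq> carrier R" "\<forall>w\<in>set vs2. cvec w" "length cs2 = length vs2"
  shows "lin_comb R (cs1@cs2) (vs1@vs2) p = lin_comb R cs1 vs1 p \<oplus> lin_comb R cs2 vs2 p"
  using assms
proof (induction vs1 arbitrary: cs1)
  case Nil
  then show ?case using lin_comb_carrier[of cs2 vs2 p] by (simp add: lin_comb_Nil)
next
  case (Cons v vs)
  then obtain c cs where cs1: "cs1 = c # cs" by (cases cs1) auto
  have "lin_comb R (cs1@cs2) ((v#vs)@vs2) p = lin_comb R (c # (cs@cs2)) (v # (vs@vs2)) p"
    using cs1 by simp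
  also have "\<dots> = c \<otimes> v p \<oplus> lin_comb R (cs@cs2) (vs@vs2) p"
    by (rule lin_comb_Cons) (use Cons.prems cs1 in auto)
  also have "\<dots> = c \<otimes> v p \<oplus> (lin_comb R cs vs p \<oplus> lin_comb R cs2 vs2 p)"
    using Cons cs1 by simp
  also have "\<dots> = (c \<otimes> v p \<oplus> lin_comb R cs vs p) \<oplus> lin_comb R cs2 vs2 p"
    using Cons.prems cs1 lin_comb_carrier[of cs vs p] lin_comb_carrier[of cs2 vs2 p]
    by (simp add: a_assoc cvec_def)
  also have "\<dots> = lin_comb R cs1 (v#vs) p \<oplus> lin_comb R cs2 vs2 p"
    using lin_comb_Cons[of c cs v vs p] Cons.prems cs1 by simp
  finally show ?case .
qed

lemma lin_comb_scale:
  assumes "d \<in> carrier R" "set cs \<subseteq> carrier R" "\<forall>w\<in>set vs. cvec w" "length cs = length vs"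
  shows "lin_comb R (map (\<lambda>x. d \<otimes> x) cs) vs p = d \<otimes> lin_comb R cs vs p"
  using assms
proof (induction vs arbitrary: cs)
  case Nil
  then show ?case by (simp add: lin_comb_Nil)
next
  case (Cons v vs)
  then obtain c cs' where cs: "cs = c # cs'" by (cases cs) auto
  have "lin_comb R (map (\<lambda>x. d \<otimes> x) cs) (v#vs) p = lin_comb R ((d \<otimes> c) # map (\<lambda>x. d \<otimes> x) cs') (v#vs) p"
    using cs by simp
  also have "\<dots> = (d \<otimes> c) \<otimes> v p \<oplus> lin_comb R (map (\<lambda>x. d \<otimes> x) cs') vs p"
    by (rule lin_comb_Cons) (use Cons.prems cs in auto)
  also have "\<dots> = (d \<otimes> c) \<otimes> v p \<oplus> d \<otimes> lin_comb R cs' vs p"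
    using Cons cs by simp
  also have "\<dots> = d \<otimes> (c \<otimes> v p \<oplus> lin_comb R cs' vs p)"
    using Cons.prems cs lin_comb_carrier[of cs' vs p]
    by (simp add: r_distr m_assoc cvec_def)
  also have "\<dots> = d \<otimes> lin_comb R cs (v#vs) p"
    using lin_comb_Cons[of c cs' v vs p] Cons.prems cs by simp
  finally show ?case .
qed

lemma lin_comb_diff:
  assumes "set cs \<subseteq> carrier R" "set ds \<subseteq> carrier R" "\<forall>w\<in>set vs. cvec w"
    "length cs = length vs" "length ds = length vs"
  shows "lin_comb R (map2 (\<lambda>x y. x \<ominus> y) cs ds) vs p = lin_comb R cs vs p \<ominus> lin_comb R ds vs p"
  using assms
proof (induction vs arbitrary: cs ds)
  case Nil
  then show ?case using r_neg[of \<zero>] by (simp add: lin_comb_Nil minus_eq)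
next
  case (Cons v vs)
  then obtain c cs' where cs: "cs = c # cs'" by (cases cs) auto
  from Cons obtain d ds' where ds: "ds = d # ds'" by (cases ds) auto
  have vp: "v p \<in> carrier R" using Cons.prems by (simp add: cvec_def)
  have A: "lin_comb R cs' vs p \<in> carrier R" "lin_comb R ds' vs p \<in> carrier R"
    using Cons.prems cs ds by (auto intro!: lin_comb_carrier)
  have "lin_comb R (map2 (\<lambda>x y. x \<ominus> y) cs ds) (v#vs) p
      = lin_comb R ((c \<ominus> d) # map2 (\<lambda>x y. x \<ominus> y) cs' ds') (v#vs) p"
    using cs ds by simp
  also have "\<dots> = (c \<ominus> d) \<otimes> v p \<oplus> lin_comb R (map2 (\<lambda>x y. x \<ominus> y) cs' ds') vs p"
    by (rule lin_comb_Cons) (use Cons.prems cs ds in \<open>auto simp: set_zip intro!: minus_closed nth_carrier\<close>)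
  also have "\<dots> = (c \<ominus> d) \<otimes> v p \<oplus> (lin_comb R cs' vs p \<ominus> lin_comb R ds' vs p)"
    using Cons cs ds by simp
  also have "\<dots> = (c \<otimes> v p \<oplus> lin_comb R cs' vs p) \<ominus> (d \<otimes> v p \<oplus> lin_comb R ds' vs p)"
    using Cons.prems cs ds vp A by (simp add: minus_eq l_distr l_minus minus_add a_ac)
  also have "\<dots> = lin_comb R cs (v#vs) p \<ominus> lin_comb R ds (v#vs) p"
    using lin_comb_Cons[of c cs' v vs p] lin_comb_Cons[of d ds' v vs p] Cons.prems cs ds by simp
  finally show ?case .
qed

lemma subspace_cvec: "is_subspace R G V \<Longrightarrow> v \<in> V \<Longrightarrow> cvec v"
  unfolding is_subspace_def using cvec_vecs by (meson subsetD)

lemma subspace_D: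
  assumes "is_subspace R G V"
  shows "V \<subseteq> vecs R G" "(\<lambda>_. \<zero>) \<in> V"
    "\<And>u v. u \<in> V \<Longrightarrow> v \<in> V \<Longrightarrow> (\<lambda>i. u i \<oplus> v i) \<in> V"
    "\<And>c v. c \<in> carrier R \<Longrightarrow> v \<in> V \<Longrightarrow> (\<lambda>i. c \<otimes> v i) \<in> V"
  using assms unfolding is_subspace_def by simp_all

lemma subspace_lin_comb:
  assumes "is_subspace R G V" "set vs \<subseteq> V" "length cs = length vs" "set cs \<subseteq> carrier R"
  shows "lin_comb R cs vs \<in> V"
  using assms(2-4)
proof (induction vs arbitrary: cs)
  case Nil
  then show ?case using subspace_D(2)[OF assms(1)] by (simp add: lin_comb_Nil)
next
  case (Cons v vs)
  then obtain c cs' where cs: "cs = c # cs'" by (cases cs) auto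
  have cv: "\<forall>w\<in>set (v#vs). cvec w" using Cons.prems subspace_cvec[OF assms(1)] by auto
  have c: "c \<in> carrier R" "set cs' \<subseteq> carrier R" "length cs' = length vs" using Cons.prems cs by auto
  have "(\<lambda>i. c \<otimes> v i) \<in> V" using subspace_D(4)[OF assms(1) c(1)] Cons.prems by simp
  moreover have "lin_comb R cs' vs \<in> V" using Cons.IH[of cs'] Cons.prems c by simp
  ultimately have "(\<lambda>i. (\<lambda>i. c \<otimes> v i) i \<oplus> lin_comb R cs' vs i) \<in> V"
    by (rule subspace_D(3)[OF assms(1)])
  moreover have "lin_comb R cs (v#vs) = (\<lambda>i. (\<lambda>i. c \<otimes> v i) i \<oplus> lin_comb R cs' vs i)"
  proof
    fix i show "lin_comb R cs (v#vs) i = (\<lambda>i. (\<lambda>i. c \<otimes> v i) i \<oplus> lin_comb R cs' vs i) i"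
      using lin_comb_Cons[of c cs' v vs i] c cv cs by simp
  qed
  ultimately show ?case by simp
qed

lemma subspace_diff:
  assumes "is_subspace R G V" "x \<in> V" "y \<in> V"
  shows "(\<lambda>i. x i \<ominus> y i) \<in> V"
proof -
  have "(\<lambda>i. (\<ominus> \<one>) \<otimes> y i) \<in> V" using subspace_D(4)[OF assms(1) _ assms(3)] by simp
  then have "(\<lambda>i. x i \<oplus> (\<lambda>i. (\<ominus> \<one>) \<otimes> y i) i) \<in> V" using subspace_D(3)[OF assms(1) assms(2)] by blast
  moreover have "(\<lambda>i. x i \<oplus> (\<lambda>i. (\<ominus> \<one>) \<otimes> y i) i) = (\<lambda>i. x i \<ominus> y i)"
  proof
    fix i
    have "x i \<in> carrier R" "y i \<in> carrier R"
      using subspace_cvec[OF assms(1,2)] subspace_cvec[OF assms(1,3)] by (auto simp: cvec_def)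
    then show "x i \<oplus> (\<lambda>i. (\<ominus> \<one>) \<otimes> y i) i = x i \<ominus> y i" by (simp add: minus_eq l_minus)
  qed
  ultimately show ?thesis by simp
qed

lemma span_ofI: "set vs \<subseteq> S \<Longrightarrow> length cs = length vs \<Longrightarrow> set cs \<subseteq> carrier R \<Longrightarrow> lin_comb R cs vs \<in> span_of R S"
  unfolding span_of_def by blast

lemma span_ofE:
  assumes "u \<in> span_of R S"
  obtains cs vs where "u = lin_comb R cs vs" "set vs \<subseteq> S" "length cs = length vs" "set cs \<subseteq> carrier R"
  using assms unfolding span_of_def by blast

lemma span_subspace:
  assumes "S \<subseteq> vecs R G"
  shows "is_subspace R G (span_of R S)"
proof -
  have cv: "\<forall>w\<in>set vs. cvec w" if "set vs \<subseteq> S" for vs using that assms cvec_vecs by (meson subsetD)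
  have "span_of R S \<subseteq> vecs R G"
  proof
    fix u assume "u \<in> span_of R S"
    then obtain cs vs where "u = lin_comb R cs vs" "set vs \<subseteq> S" "length cs = length vs" "set cs \<subseteq> carrier R"
      by (rule span_ofE)
    then show "u \<in> vecs R G" using assms by (auto intro!: subspace_lin_comb[OF vecs_subspace])
  qed
  moreover have "(\<lambda>_. \<zero>) \<in> span_of R S"
    using span_ofI[of "[]" S "[]"] by (simp add: lin_comb_Nil)
  moreover have "(\<lambda>i. u i \<oplus> v i) \<in> span_of R S" if hu: "u \<in> span_of R S" and hv: "v \<in> span_of R S" for u v
  proof -
    obtain cs vs where u: "u = lin_comb R cs vs" "set vs \<subseteq> S" "length cs = length vs" "set cs \<subseteq> carrier R"
      by (rule span_ofE[OF hu])
    obtain ds ws where v: "v = lin_comb R ds ws" "set ws \<subseteq> S" "length ds = length ws" "set ds \<subseteq> carrier R"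
      by (rule span_ofE[OF hv])
    have "(\<lambda>i. u i \<oplus> v i) = lin_comb R (cs@ds) (vs@ws)"
    proof
      fix i show "u i \<oplus> v i = lin_comb R (cs@ds) (vs@ws) i"
        using lin_comb_append[of cs vs ds ws i] u v cv[of vs] cv[of ws] by simp
    qed
    moreover have "lin_comb R (cs@ds) (vs@ws) \<in> span_of R S"
      by (rule span_ofI) (use u v in auto)
    ultimately show ?thesis by simp
  qed
  moreover have "(\<lambda>i. c \<otimes> u i) \<in> span_of R S" if hc: "c \<in> carrier R" and hu: "u \<in> span_of R S" for c u
  proof -
    obtain cs vs where u: "u = lin_comb R cs vs" "set vs \<subseteq> S" "length cs = length vs" "set cs \<subseteq> carrier R"
      by (rule span_ofE[OF hu])
    have "(\<lambda>i. c \<otimes> u i) = lin_comb R (map (\<lambda>x. c \<otimes> x) cs) vs"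
    proof
      fix i show "c \<otimes> u i = lin_comb R (map (\<lambda>x. c \<otimes> x) cs) vs i"
        using lin_comb_scale[of c cs vs i] u cv[of vs] hc by simp
    qed
    moreover have "lin_comb R (map (\<lambda>x. c \<otimes> x) cs) vs \<in> span_of R S"
      by (rule span_ofI) (use u hc in auto)
    ultimately show ?thesis by simp
  qed
  ultimately show ?thesis unfolding is_subspace_def by blast
qed

lemma span_sub:
  assumes "is_subspace R G V" "S \<subseteq> V"
  shows "span_of R S \<subseteq> V"
proof
  fix u assume "u \<in> span_of R S"
  then obtain cs vs where "u = lin_comb R cs vs" "set vs \<subseteq> S" "length cs = length vs" "set cs \<subseteq> carrier R"
    by (rule span_ofE)
  then show "u \<in> V" using subspace_lin_comb[OF assms(1), of vs cs] assms(2) by auto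
qed

lemma span_inc:
  assumes "S \<subseteq> vecs R G"
  shows "S \<subseteq> span_of R S"
proof
  fix w assume w: "w \<in> S"
  have cw: "cvec w" using w assms cvec_vecs by (meson subsetD)
  have "lin_comb R [\<one>] [w] = w"
  proof
    fix p show "lin_comb R [\<one>] [w] p = w p"
      using lin_comb_Cons[of "\<one>" "[]" w "[]" p] cw by (simp add: lin_comb_Nil cvec_def)
  qed
  moreover have "lin_comb R [\<one>] [w] \<in> span_of R S" by (rule span_ofI) (use w in auto)
  ultimately show "w \<in> span_of R S" by simp
qed

lemma span_mono: "S \<subseteq> T \<Longrightarrow> span_of R S \<subseteq> span_of R T"
  unfolding span_of_def by blast

lemma lin_comb_diag:
  assumes "distinct e" "length cs = length e" "set cs \<subseteq> carrier R" "k0 < length e"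
    "\<forall>p\<in>set e. cvec (z p)" "\<forall>p\<in>set e. p \<noteq> e!k0 \<longrightarrow> z p (e!k0) = \<zero>"
  shows "lin_comb R cs (map z e) (e!k0) = cs!k0 \<otimes> z (e!k0) (e!k0)"
proof -
  have hz: "\<And>k p. k < length e \<Longrightarrow> z (e!k) p \<in> carrier R" using assms(5) nth_mem by (auto simp: cvec_def)
  have hc: "\<And>k. k < length e \<Longrightarrow> cs!k \<in> carrier R" using assms(2,3) nth_carrier by auto
  have "lin_comb R cs (map z e) (e!k0) = (\<Oplus>k\<in>{..<length e}. cs!k \<otimes> z (e!k) (e!k0))"
    unfolding lin_comb_def using assms nth_mem by (intro finsum_cong') (auto simp: cvec_def intro!: nth_carrier)
  also have "\<dots> = (\<Oplus>k\<in>{..<length e}. if k0 = k then cs!k \<otimes> z (e!k) (e!k0) else \<zero>)"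
  proof (rule finsum_cong')
    show "(\<lambda>k. if k0 = k then cs!k \<otimes> z (e!k) (e!k0) else \<zero>) \<in> {..<length e} \<rightarrow> carrier R"
      using hz hc by auto
    fix k assume k: "k \<in> {..<length e}"
    show "cs!k \<otimes> z (e!k) (e!k0) = (if k0 = k then cs!k \<otimes> z (e!k) (e!k0) else \<zero>)"
    proof (cases "k0 = k")
      case False
      then have "e!k \<noteq> e!k0" using assms(1,4) k by (simp add: nth_eq_iff_index_eq)
      then have "z (e!k) (e!k0) = \<zero>" using assms(6) k by auto
      then show ?thesis using False k assms(2,3) by (simp add: nth_carrier)
    qed simp
  qed simp
  also have "\<dots> = cs!k0 \<otimes> z (e!k0) (e!k0)"
  proof -
    have "e!k0 \<in> set e" using assms(4) by simp
    then have "z (e!k0) (e!k0) \<in> carrier R" using assms(5) by (simp add: cvec_def)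
    moreover have "cs!k0 \<in> carrier R" using assms(2-4) by (simp add: nth_carrier)
    moreover have "(\<lambda>k. cs!k \<otimes> z (e!k) (e!k0)) \<in> {..<length e} \<rightarrow> carrier R"
      using assms by (auto simp: cvec_def intro!: nth_carrier)
    ultimately show ?thesis using assms(4)
      by (intro finsum_singleton) auto
  qed
  finally show ?thesis .
qed


lemma minus_zero_eq:
  assumes "x \<in> carrier R" "y \<in> carrier R" "x \<ominus> y = \<zero>"
  shows "x = y"
proof -
  have "x = (x \<ominus> y) \<oplus> y" using assms(1,2) by algebra
  then show ?thesis using assms by simp
qed

lemma minus_self: "x \<in> carrier R \<Longrightarrow> x \<ominus> x = \<zero>"
  by (simp add: minus_eq r_neg)

lemma vecs_zero: "v \<in> vecs R G \<Longrightarrow> p \<notin> G \<Longrightarrow> v p = \<zero>"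
  unfolding vecs_def by simp

lemma corr_empty:
  assumes "V \<subseteq> vecs R G"
  shows "corr' G V {}"
  unfolding corr'_def
proof (intro ballI impI)
  fix x y assume xy: "x \<in> V" "y \<in> V" "\<forall>p\<in>G - {}. x p = y p"
  show "x = y"
  proof
    fix p show "x p = y p"
    proof (cases "p \<in> G")
      case True then show ?thesis using xy by simp
    next
      case False then show ?thesis using xy assms vecs_zero by (metis subsetD)
    qed
  qed
qed

lemma diag_count:
  assumes "finite G" "is_subspace R G V" "finite P"
    "\<And>p. p \<in> P \<Longrightarrow> z p \<in> V" "\<And>p. p \<in> P \<Longrightarrow> z p p \<noteq> \<zero>"
    "\<And>p p'. p \<in> P \<Longrightarrow> p' \<in> P \<Longrightarrow> p' \<noteq> p \<Longrightarrow> z p p' = \<zero>"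
  shows "q ^ card P \<le> card V"
proof -
  obtain e where e: "set e = P" "distinct e" using finite_distinct_list[OF assms(3)] by blast
  define F where "F c = lin_comb R (map c e) (map z e)" for c
  have cz: "\<forall>p\<in>set e. cvec (z p)" using e(1) assms(4) subspace_cvec[OF assms(2)] by auto
  have Fdiag: "F c p = c p \<otimes> z p p" if c: "c \<in> (\<Pi>\<^sub>E i\<in>P. carrier R)" and p: "p \<in> P" for c p
  proof -
    obtain k0 where k0: "k0 < length e" "e!k0 = p" using p e(1) by (auto simp: in_set_conv_nth)
    have "F c (e!k0) = (map c e)!k0 \<otimes> z (e!k0) (e!k0)"
      unfolding F_def
    proof (rule lin_comb_diag)
      show "set (map c e) \<subseteq> carrier R" using c e(1) by auto
      show "\<forall>pa\<in>set e. pa \<noteq> e ! k0 \<longrightarrow> z pa (e ! k0) = \<zero>"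
        using assms(6) e(1) k0 p by auto
    qed (use e k0 cz in auto)
    then show ?thesis using k0 by simp
  qed
  have "card (\<Pi>\<^sub>E i\<in>P. carrier R) \<le> card V"
  proof (rule card_inj_on_le[where f=F])
    show "F ` (\<Pi>\<^sub>E i\<in>P. carrier R) \<subseteq> V"
    proof
      fix w assume "w \<in> F ` (\<Pi>\<^sub>E i\<in>P. carrier R)"
      then obtain c where c: "c \<in> (\<Pi>\<^sub>E i\<in>P. carrier R)" "w = F c" by blast
      have "lin_comb R (map c e) (map z e) \<in> V"
        by (rule subspace_lin_comb[OF assms(2)]) (use c e assms(4) in auto)
      then show "w \<in> V" using c by (simp add: F_def)
    qed
    show "inj_on F (\<Pi>\<^sub>E i\<in>P. carrier R)"
    proof (rule inj_onI)
      fix c d assume c: "c \<in> (\<Pi>\<^sub>E i\<in>P. carrier R)" and d: "d \<in> (\<Pi>\<^sub>E i\<in>P. carrier R)" and Fcd: "F c = F d"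
      show "c = d"
      proof (rule PiE_ext[OF c d])
        fix p assume p: "p \<in> P"
        have zc: "z p p \<in> carrier R" using cz e(1) p by (auto simp: cvec_def)
        have "c p \<otimes> z p p = d p \<otimes> z p p" using Fdiag[OF c p] Fdiag[OF d p] Fcd by simp
        then show "c p = d p" using m_rcancel[OF assms(5)[OF p] zc] c d p by auto
      qed
    qed
    show "finite V" using assms(1,2) vecs_finite finite_subset subspace_D(1) by blast
  qed
  moreover have "card (\<Pi>\<^sub>E i\<in>P. carrier R) = q ^ card P" using assms(3) by (simp add: card_PiE)
  ultimately show ?thesis by simp
qed

lemma diff_witness:
  assumes "is_subspace R G V" "U \<subseteq> V" "corr' G U D" "\<not> corr' G U (insert p D)" "p \<notin> D"
  shows "\<exists>z\<in>V. z p \<noteq> \<zero> \<and> (\<forall>p'. p' \<notin> D \<longrightarrow> p' \<noteq> p \<longrightarrow> z p' = \<zero>)"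
proof -
  obtain x y where xy: "x \<in> U" "y \<in> U" "\<forall>p'\<in>G - insert p D. x p' = y p'" "x \<noteq> y"
    using assms(4) unfolding corr'_def by blast
  have xV: "x \<in> V" "y \<in> V" using xy assms(2) by auto
  have cx: "cvec x" "cvec y" using xV subspace_cvec[OF assms(1)] by auto
  have vx: "x \<in> vecs R G" "y \<in> vecs R G" using xV subspace_D(1)[OF assms(1)] by auto
  define z where "z = (\<lambda>i. x i \<ominus> y i)"
  have zV: "z \<in> V" unfolding z_def by (rule subspace_diff[OF assms(1) xV])
  have z0: "z p' = \<zero>" if "p' \<notin> D" "p' \<noteq> p" for p'
  proof (cases "p' \<in> G")
    case True
    then have "x p' = y p'" using xy(3) that by auto
    then show ?thesis unfolding z_def using cx by (simp add: minus_self cvec_def)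
  next
    case False
    then have "x p' = \<zero>" "y p' = \<zero>" using vecs_zero[OF vx(1)] vecs_zero[OF vx(2)] by auto
    then show ?thesis unfolding z_def by (simp add: minus_eq)
  qed
  have "z p \<noteq> \<zero>"
  proof
    assume "z p = \<zero>"
    then have "x p = y p" unfolding z_def using cx minus_zero_eq by (simp add: cvec_def)
    then have "\<forall>p'\<in>G - D. x p' = y p'" using xy(3) by auto
    then have "x = y" using assms(3) xy(1,2) unfolding corr'_def by blast
    then show False using xy(4) by simp
  qed
  then show ?thesis using zV z0 by blast
qed

lemma maxcorr_count:
  assumes "finite G" "is_subspace R G V" "U \<subseteq> V" "D \<subseteq> G" "corr' G U D"
    "\<And>p. p \<in> G - D \<Longrightarrow> \<not> corr' G U (insert p D)"
  shows "q ^ card (G - D) \<le> card V"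
proof -
  have "\<forall>p\<in>G-D. \<exists>z\<in>V. z p \<noteq> \<zero> \<and> (\<forall>p'. p' \<notin> D \<longrightarrow> p' \<noteq> p \<longrightarrow> z p' = \<zero>)"
    using diff_witness[OF assms(2,3,5)] assms(6) by blast
  then obtain z where z: "\<And>p. p \<in> G-D \<Longrightarrow> z p \<in> V \<and> z p p \<noteq> \<zero> \<and> (\<forall>p'. p' \<notin> D \<longrightarrow> p' \<noteq> p \<longrightarrow> z p p' = \<zero>)"
    by metis
  show ?thesis
    by (rule diag_count[OF assms(1,2), where z=z]) (use z assms(1) in auto)
qed

lemma dim_card:
  assumes "finite G" "is_subspace R G C" "dim_ge R C k"
  shows "q ^ k \<le> card C"
proof -
  obtain vs where vs: "length vs = k" "set vs \<subseteq> C" "lin_indep R vs"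
    using assms(3) unfolding dim_ge_def by blast
  have cv: "\<forall>w\<in>set vs. cvec w" using vs(2) subspace_cvec[OF assms(2)] by auto
  define L where "L = {cs. set cs \<subseteq> carrier R \<and> length cs = k}"
  have "card L \<le> card C"
  proof (rule card_inj_on_le[where f="\<lambda>cs. lin_comb R cs vs"])
    show "(\<lambda>cs. lin_comb R cs vs) ` L \<subseteq> C"
      using subspace_lin_comb[OF assms(2)] vs unfolding L_def by auto
    show "inj_on (\<lambda>cs. lin_comb R cs vs) L"
    proof (rule inj_onI)
      fix cs ds assume cs: "cs \<in> L" and ds: "ds \<in> L" and eq: "lin_comb R cs vs = lin_comb R ds vs"
      define es where "es = map2 (\<lambda>x y. x \<ominus> y) cs ds"
      have les: "length es = length vs" using cs ds vs unfolding es_def L_def by simp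
      have ses: "set es \<subseteq> carrier R" using cs ds unfolding es_def L_def
        by (auto simp: set_zip intro!: minus_closed nth_carrier)
      have "lin_comb R es vs = (\<lambda>_. \<zero>)"
      proof
        fix p
        have "lin_comb R es vs p = lin_comb R cs vs p \<ominus> lin_comb R ds vs p"
          unfolding es_def by (rule lin_comb_diff) (use cs ds vs cv in \<open>auto simp: L_def\<close>)
        also have "\<dots> = \<zero>" using eq lin_comb_carrier[of ds vs p] ds vs cv
          by (simp add: minus_self L_def)
        finally show "lin_comb R es vs p = \<zero>" .
      qed
      then have z: "\<forall>i<length vs. es ! i = \<zero>" using vs(3) les ses unfolding lin_indep_def by blast
      show "cs = ds"
      proof (rule nth_equalityI)
        show "length cs = length ds" using cs ds by (simp add: L_def)
        fix i assume i: "i < length cs"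
        then have "es ! i = cs ! i \<ominus> ds ! i" "i < length vs" using cs ds vs by (simp_all add: es_def L_def)
        moreover have "cs!i \<in> carrier R" "ds!i \<in> carrier R" using cs ds i by (auto simp: L_def intro!: nth_carrier)
        ultimately show "cs ! i = ds ! i" using z minus_zero_eq[of "cs!i" "ds!i"] by simp
      qed
    qed
    show "finite C" using assms(1,2) vecs_finite finite_subset subspace_D(1) by blast
  qed
  moreover have "card L = q ^ k" unfolding L_def by (rule card_lists_length_eq[OF finR])
  ultimately show ?thesis by simp
qed

lemma q_pow_le: "q ^ a \<le> q ^ b \<Longrightarrow> a \<le> b"
  using power_le_imp_le_exp[of q a b] q_ge2 by simp



lemma exists_max_corr:
  assumes "finite G" "E \<subseteq> G" "V \<subseteq> vecs R G"
  shows "\<exists>D\<subseteq>E. corr' G V D \<and> (\<forall>p\<in>E-D. \<not> corr' G V (insert p D))"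
proof -
  have "finite E" using assms(1,2) finite_subset by blast
  then obtain D where D: "{} \<subseteq> D" "D \<subseteq> E" "corr' G V D" "\<forall>T'. D \<subset> T' \<longrightarrow> T' \<subseteq> E \<longrightarrow> \<not> corr' G V T'"
    using finite_maximal_superset[of E "{}" "corr' G V"] corr_empty[OF assms(3)] by blast
  have "\<not> corr' G V (insert p D)" if "p \<in> E - D" for p
    using D(4)[rule_format, of "insert p D"] that D(2) by blast
  then show ?thesis using D by blast
qed

lemma info_set:
  assumes "finite G" "lin_code R G k C"
  shows "\<exists>A\<subseteq>G. k \<le> card A \<and> corr' G C (G - A) \<and>
           (\<forall>p\<in>A. \<exists>z\<in>C. z p \<noteq> \<zero> \<and> (\<forall>p'\<in>A. p' \<noteq> p \<longrightarrow> z p' = \<zero>))"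
proof -
  have sub: "is_subspace R G C" and dg: "dim_ge R C k" using assms(2) unfolding lin_code_def by auto
  obtain D where D: "D \<subseteq> G" "corr' G C D" "\<forall>p\<in>G-D. \<not> corr' G C (insert p D)"
    using exists_max_corr[OF assms(1) order_refl subspace_D(1)[OF sub]] by blast
  have "q ^ k \<le> card C" by (rule dim_card[OF assms(1) sub dg])
  also have "\<dots> \<le> q ^ card (G - D)" by (rule corr_card[OF assms(1) subspace_D(1)[OF sub] D(2)])
  finally have kle: "k \<le> card (G - D)" by (rule q_pow_le)
  have GD: "G - (G - D) = D" using D(1) by auto
  have "\<forall>p\<in>G - D. \<exists>z\<in>C. z p \<noteq> \<zero> \<and> (\<forall>p'\<in>G - D. p' \<noteq> p \<longrightarrow> z p' = \<zero>)"
  proof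
    fix p assume p: "p \<in> G - D"
    obtain z where "z \<in> C" "z p \<noteq> \<zero>" "\<forall>p'. p' \<notin> D \<longrightarrow> p' \<noteq> p \<longrightarrow> z p' = \<zero>"
      using diff_witness[OF sub order_refl D(2)] D(3) p by blast
    then show "\<exists>z\<in>C. z p \<noteq> \<zero> \<and> (\<forall>p'\<in>G - D. p' \<noteq> p \<longrightarrow> z p' = \<zero>)" by blast
  qed
  then show ?thesis using kle D(2) GD by (intro exI[of _ "G - D"]) auto
qed

lemma shrink:
  assumes "finite G" "lin_code R G k C"
  shows "\<exists>C' A0. C' \<subseteq> C \<and> lin_code R G k C' \<and> A0 \<subseteq> G \<and> card A0 = k \<and> corr' G C' (G - A0)"
proof -
  have sub: "is_subspace R G C" using assms(2) unfolding lin_code_def by auto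
  obtain A where A: "A \<subseteq> G" "k \<le> card A" "corr' G C (G - A)"
    "\<forall>p\<in>A. \<exists>z\<in>C. z p \<noteq> \<zero> \<and> (\<forall>p'\<in>A. p' \<noteq> p \<longrightarrow> z p' = \<zero>)"
    using info_set[OF assms] by blast
  have "\<forall>p\<in>A. \<exists>z. z \<in> C \<and> z p \<noteq> \<zero> \<and> (\<forall>p'\<in>A. p' \<noteq> p \<longrightarrow> z p' = \<zero>)"
    using A(4) by blast
  then have "\<exists>x. \<forall>p\<in>A. x p \<in> C \<and> x p p \<noteq> \<zero> \<and> (\<forall>p'\<in>A. p' \<noteq> p \<longrightarrow> x p p' = \<zero>)"
    by (rule bchoice)
  then obtain x where x0: "\<forall>p\<in>A. x p \<in> C \<and> x p p \<noteq> \<zero> \<and> (\<forall>p'\<in>A. p' \<noteq> p \<longrightarrow> x p p' = \<zero>)"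
    by blast
  have x: "\<And>p. p \<in> A \<Longrightarrow> x p \<in> C \<and> x p p \<noteq> \<zero> \<and> (\<forall>p'\<in>A. p' \<noteq> p \<longrightarrow> x p p' = \<zero>)"
    using x0 by blast
  obtain A0 where A0: "A0 \<subseteq> A" "card A0 = k" "finite A0" using obtain_subset_with_card_n[OF A(2)] by blast
  define C' where "C' = {v\<in>C. \<forall>i\<in>A - A0. v i = \<zero>}"
  have cC: "cvec v" if "v \<in> C" for v using subspace_cvec[OF sub that] .
  have sub': "is_subspace R G C'"
  proof -
    have "C' \<subseteq> vecs R G" using subspace_D(1)[OF sub] unfolding C'_def by auto
    moreover have "(\<lambda>_. \<zero>) \<in> C'" using subspace_D(2)[OF sub] unfolding C'_def by auto
    moreover have "(\<lambda>i. u i \<oplus> v i) \<in> C'" if "u \<in> C'" "v \<in> C'" for u v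
    proof -
      have h: "u \<in> C" "v \<in> C" "\<forall>i\<in>A-A0. u i = \<zero>" "\<forall>i\<in>A-A0. v i = \<zero>"
        using that unfolding C'_def by auto
      have "(\<lambda>i. u i \<oplus> v i) \<in> C" using subspace_D(3)[OF sub h(1,2)] .
      moreover have "\<forall>i\<in>A-A0. u i \<oplus> v i = \<zero>" using h(3,4) by simp
      ultimately show ?thesis unfolding C'_def by simp
    qed
    moreover have "(\<lambda>i. c \<otimes> v i) \<in> C'" if "c \<in> carrier R" "v \<in> C'" for c v
    proof -
      have h: "v \<in> C" "\<forall>i\<in>A-A0. v i = \<zero>"
        using that unfolding C'_def by auto
      have "(\<lambda>i. c \<otimes> v i) \<in> C" using subspace_D(4)[OF sub that(1) h(1)] .
      moreover have "\<forall>i\<in>A-A0. c \<otimes> v i = \<zero>" using h(2) that(1) by simp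
      ultimately show ?thesis unfolding C'_def by simp
    qed
    ultimately show ?thesis unfolding is_subspace_def by blast
  qed
  obtain e where e: "set e = A0" "distinct e" using finite_distinct_list[OF A0(3)] by blast
  have le: "length e = k" using distinct_card[OF e(2)] e(1) A0(2) by simp
  have xe: "set (map x e) \<subseteq> C'"
  proof
    fix w assume "w \<in> set (map x e)"
    then obtain p where p: "p \<in> A0" "w = x p" using e(1) by auto
    then have pA: "p \<in> A" using A0(1) by auto
    then have "x p \<in> C" "\<forall>i\<in>A - A0. x p i = \<zero>" using x[OF pA] p(1) by auto
    then show "w \<in> C'" unfolding C'_def using p by simp
  qed
  have indep: "lin_indep R (map x e)"
    unfolding lin_indep_def
  proof (rule allI, rule impI)
    fix cs assume cs: "length cs = length (map x e) \<and> set cs \<subseteq> carrier R \<and> lin_comb R cs (map x e) = (\<lambda>_. \<zero>)"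
    show "\<forall>k<length (map x e). cs ! k = \<zero>"
    proof (intro allI impI)
      fix k0 assume k0: "k0 < length (map x e)"
      have ek: "e!k0 \<in> A0" using k0 e(1) by auto
      have "lin_comb R cs (map x e) (e!k0) = cs!k0 \<otimes> x (e!k0) (e!k0)"
      proof (rule lin_comb_diag)
        show "\<forall>p\<in>set e. cvec (x p)"
        proof
          fix p assume "p \<in> set e"
          then have "p \<in> A" using e(1) A0(1) by auto
          then show "cvec (x p)" using x cC by simp
        qed
        show "\<forall>p\<in>set e. p \<noteq> e ! k0 \<longrightarrow> x p (e ! k0) = \<zero>"
        proof (intro ballI impI)
          fix p assume "p \<in> set e" "p \<noteq> e ! k0"
          moreover have "p \<in> A" "e!k0 \<in> A" using \<open>p \<in> set e\<close> e(1) A0(1) ek by auto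
          ultimately show "x p (e ! k0) = \<zero>" using x[of p] by auto
        qed
      qed (use cs k0 e in auto)
      then have "cs!k0 \<otimes> x (e!k0) (e!k0) = \<zero>" using cs by simp
      moreover have "cs!k0 \<in> carrier R" using cs k0 by (auto intro!: nth_carrier)
      moreover have "x (e!k0) (e!k0) \<in> carrier R" "x (e!k0) (e!k0) \<noteq> \<zero>"
        using x[of "e!k0"] cC ek A0(1) by (auto simp: cvec_def)
      ultimately show "cs ! k0 = \<zero>" using integral_iff by simp
    qed
  qed
  have "dim_ge R C' k" unfolding dim_ge_def using le xe indep by (intro exI[of _ "map x e"]) auto
  then have lc: "lin_code R G k C'" using sub' unfolding lin_code_def by blast
  have corr: "corr' G C' (G - A0)"
    unfolding corr'_def
  proof (intro ballI impI)
    fix u v assume u: "u \<in> C'" and v: "v \<in> C'" and eq: "\<forall>p\<in>G - (G - A0). u p = v p"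
    have "\<forall>p\<in>G - (G - A). u p = v p"
    proof
      fix p assume p: "p \<in> G - (G - A)"
      show "u p = v p"
      proof (cases "p \<in> A0")
        case True then show ?thesis using eq A0(1) A(1) by auto
      next
        case False then show ?thesis using u v p unfolding C'_def by auto
      qed
    qed
    moreover have "u \<in> C" "v \<in> C" using u v unfolding C'_def by auto
    ultimately show "u = v" using A(3) unfolding corr'_def by blast
  qed
  have "C' \<subseteq> C" unfolding C'_def by auto
  moreover have "A0 \<subseteq> G" using A0(1) A(1) by auto
  ultimately show ?thesis using lc corr A0(2) by (intro exI[of _ C'] exI[of _ A0]) simp
qed



lemma prods_vecs:
  assumes "Ccol \<subseteq> vecs R {1..m}" "Crow \<subseteq> vecs R {1..n}"
  shows "{(\<lambda>(i,j). u i \<otimes> v j) | u v. u \<in> Ccol \<and> v \<in> Crow} \<subseteq> vecs R (grid m n)"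
proof
  fix w assume "w \<in> {(\<lambda>(i,j). u i \<otimes> v j) | u v. u \<in> Ccol \<and> v \<in> Crow}"
  then obtain u v where w: "w = (\<lambda>(i,j). u i \<otimes> v j)" "u \<in> Ccol" "v \<in> Crow" by blast
  have u: "u \<in> vecs R {1..m}" and v: "v \<in> vecs R {1..n}" using w assms by auto
  have "w p \<in> carrier R" for p
    using vecs_carrier[OF u] vecs_carrier[OF v] w(1) by (cases p) simp
  moreover have "w p = \<zero>" if "p \<notin> grid m n" for p
  proof (cases p)
    case (Pair i j)
    then have "i \<notin> {1..m} \<or> j \<notin> {1..n}" using that unfolding grid_def by auto
    then show ?thesis using vecs_zero[OF u, of i] vecs_zero[OF v, of j] vecs_carrier[OF u] vecs_carrier[OF v] w(1) Pair
      by auto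
  qed
  ultimately show "w \<in> vecs R (grid m n)" unfolding vecs_def by auto
qed

lemma tensor_sub:
  assumes "is_subspace R {1..m} Ccol" "is_subspace R {1..n} Crow"
  shows "is_subspace R (grid m n) (tensor_code R Ccol Crow)"
  unfolding tensor_code_def
  by (rule span_subspace[OF prods_vecs[OF subspace_D(1)[OF assms(1)] subspace_D(1)[OF assms(2)]]])

lemma prod_in_tensor:
  assumes "is_subspace R {1..m} Ccol" "is_subspace R {1..n} Crow" "u \<in> Ccol" "v \<in> Crow"
  shows "(\<lambda>(i,j). u i \<otimes> v j) \<in> tensor_code R Ccol Crow"
proof -
  have "(\<lambda>(i,j). u i \<otimes> v j) \<in> {(\<lambda>(i,j). u i \<otimes> v j) | u v. u \<in> Ccol \<and> v \<in> Crow}"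
    using assms(3,4) by blast
  then show ?thesis unfolding tensor_code_def
    using span_inc[OF prods_vecs[OF subspace_D(1)[OF assms(1)] subspace_D(1)[OF assms(2)]]] by blast
qed

lemma tensor_lower:
  assumes "lin_code R {1..m} k1 Ccol" "lin_code R {1..n} k2 Crow"
    "corr' (grid m n) (tensor_code R Ccol Crow) E"
  shows "k1 * k2 \<le> card (grid m n - E)"
proof -
  have s1: "is_subspace R {1..m} Ccol" and s2: "is_subspace R {1..n} Crow"
    using assms(1,2) unfolding lin_code_def by auto
  obtain A where A: "A \<subseteq> {1..m}" "k1 \<le> card A"
    "\<forall>p\<in>A. \<exists>z\<in>Ccol. z p \<noteq> \<zero> \<and> (\<forall>p'\<in>A. p' \<noteq> p \<longrightarrow> z p' = \<zero>)"
    using info_set[OF _ assms(1)] by auto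
  have "\<forall>p\<in>A. \<exists>z. z \<in> Ccol \<and> z p \<noteq> \<zero> \<and> (\<forall>p'\<in>A. p' \<noteq> p \<longrightarrow> z p' = \<zero>)" using A(3) by blast
  then have "\<exists>x. \<forall>p\<in>A. x p \<in> Ccol \<and> x p p \<noteq> \<zero> \<and> (\<forall>p'\<in>A. p' \<noteq> p \<longrightarrow> x p p' = \<zero>)" by (rule bchoice)
  then obtain x where x: "\<forall>p\<in>A. x p \<in> Ccol \<and> x p p \<noteq> \<zero> \<and> (\<forall>p'\<in>A. p' \<noteq> p \<longrightarrow> x p p' = \<zero>)" by blast
  obtain B where B: "B \<subseteq> {1..n}" "k2 \<le> card B"
    "\<forall>p\<in>B. \<exists>z\<in>Crow. z p \<noteq> \<zero> \<and> (\<forall>p'\<in>B. p' \<noteq> p \<longrightarrow> z p' = \<zero>)"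
    using info_set[OF _ assms(2)] by auto
  have "\<forall>p\<in>B. \<exists>z. z \<in> Crow \<and> z p \<noteq> \<zero> \<and> (\<forall>p'\<in>B. p' \<noteq> p \<longrightarrow> z p' = \<zero>)" using B(3) by blast
  then have "\<exists>y. \<forall>p\<in>B. y p \<in> Crow \<and> y p p \<noteq> \<zero> \<and> (\<forall>p'\<in>B. p' \<noteq> p \<longrightarrow> y p p' = \<zero>)" by (rule bchoice)
  then obtain y where y: "\<forall>p\<in>B. y p \<in> Crow \<and> y p p \<noteq> \<zero> \<and> (\<forall>p'\<in>B. p' \<noteq> p \<longrightarrow> y p p' = \<zero>)" by blast
  define z where "z = (\<lambda>(p::nat, r::nat). (\<lambda>(i::nat, j::nat). x p i \<otimes> y r j))"
  have subL: "is_subspace R (grid m n) (tensor_code R Ccol Crow)" by (rule tensor_sub[OF s1 s2])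
  have cx: "\<And>p i. p \<in> A \<Longrightarrow> x p i \<in> carrier R" using x subspace_cvec[OF s1] by (auto simp: cvec_def)
  have cy: "\<And>p i. p \<in> B \<Longrightarrow> y p i \<in> carrier R" using y subspace_cvec[OF s2] by (auto simp: cvec_def)
  have finAB: "finite (A \<times> B)" using A(1) B(1) finite_subset by (metis finite_SigmaI finite_atLeastAtMost)
  have "q ^ card (A \<times> B) \<le> card (tensor_code R Ccol Crow)"
  proof (rule diag_count[OF finite_grid subL finAB, where z=z])
    fix pr assume pr: "pr \<in> A \<times> B"
    then obtain p r where pr': "pr = (p, r)" "p \<in> A" "r \<in> B" by blast
    show "z pr \<in> tensor_code R Ccol Crow"
      using prod_in_tensor[OF s1 s2, of "x p" "y r"] x y pr' unfolding z_def by auto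
    have "x p p \<otimes> y r r \<noteq> \<zero>" using x y pr' cx cy integral_iff by simp
    then show "z pr pr \<noteq> \<zero>" unfolding z_def using pr' by simp
  next
    fix pr pr' assume h: "pr \<in> A \<times> B" "pr' \<in> A \<times> B" "pr' \<noteq> pr"
    then obtain p r p' r' where e: "pr = (p, r)" "pr' = (p', r')" "p \<in> A" "r \<in> B" "p' \<in> A" "r' \<in> B" by blast
    show "z pr pr' = \<zero>"
    proof (cases "p' = p")
      case True
      then have "r' \<noteq> r" using h e by auto
      then have "y r r' = \<zero>" using y e by auto
      then show ?thesis unfolding z_def using e cx by simp
    next
      case False
      then have "x p p' = \<zero>" using x e by auto
      then show ?thesis unfolding z_def using e cy by simp
    qed
  qed
  also have "\<dots> \<le> q ^ card (grid m n - E)"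
    by (rule corr_card[OF finite_grid subspace_D(1)[OF subL] assms(3)])
  finally have "card (A \<times> B) \<le> card (grid m n - E)" by (rule q_pow_le)
  moreover have "k1 * k2 \<le> card (A \<times> B)" using A(2) B(2) by (simp add: card_cartesian_product mult_le_mono)
  ultimately show ?thesis by linarith
qed


lemma corr_mono: "U \<subseteq> V \<Longrightarrow> corr' G V E \<Longrightarrow> corr' G U E"
  unfolding corr'_def by blast

lemma tensor_upper:
  assumes s1: "is_subspace R {1..m} Ccol" and s2: "is_subspace R {1..n} Crow"
    and A0: "A0 \<subseteq> {1..m}" and B0: "B0 \<subseteq> {1..n}"
    and c1: "corr' {1..m} Ccol ({1..m} - A0)" and c2: "corr' {1..n} Crow ({1..n} - B0)"
    and U: "U \<subseteq> tensor_code R Ccol Crow" and D: "D \<subseteq> grid m n" "corr' (grid m n) U D"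
    and nD: "\<And>p. p \<in> grid m n - D \<Longrightarrow> \<not> corr' (grid m n) U (insert p D)"
  shows "card (grid m n - D) \<le> card A0 * card B0"
proof -
  define W where "W = {x \<in> vecs R (grid m n). (\<forall>j. (\<lambda>i. x (i,j)) \<in> Ccol) \<and> (\<forall>i. (\<lambda>j. x (i,j)) \<in> Crow)}"
  have subW: "is_subspace R (grid m n) W"
  proof -
    have "W \<subseteq> vecs R (grid m n)" unfolding W_def by auto
    moreover have "(\<lambda>_. \<zero>) \<in> W"
    proof -
      have "(\<lambda>_. \<zero>) \<in> vecs R (grid m n)" by (rule subspace_D(2)[OF vecs_subspace])
      moreover have "(\<lambda>_. \<zero>) \<in> Ccol" by (rule subspace_D(2)[OF s1])
      moreover have "(\<lambda>_. \<zero>) \<in> Crow" by (rule subspace_D(2)[OF s2])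
      ultimately show ?thesis unfolding W_def by simp
    qed
    moreover have "(\<lambda>i. u i \<oplus> v i) \<in> W" if u: "u \<in> W" and v: "v \<in> W" for u v
    proof -
      have h: "u \<in> vecs R (grid m n)" "v \<in> vecs R (grid m n)" "\<And>j. (\<lambda>i. u (i,j)) \<in> Ccol" "\<And>j. (\<lambda>i. v (i,j)) \<in> Ccol"
        "\<And>i. (\<lambda>j. u (i,j)) \<in> Crow" "\<And>i. (\<lambda>j. v (i,j)) \<in> Crow" using u v unfolding W_def by auto
      have "(\<lambda>i. u i \<oplus> v i) \<in> vecs R (grid m n)" by (rule subspace_D(3)[OF vecs_subspace h(1,2)])
      moreover have "(\<lambda>i. u (i,j) \<oplus> v (i,j)) \<in> Ccol" for j by (rule subspace_D(3)[OF s1 h(3) h(4)])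
      moreover have "(\<lambda>j. u (i,j) \<oplus> v (i,j)) \<in> Crow" for i by (rule subspace_D(3)[OF s2 h(5) h(6)])
      ultimately show ?thesis unfolding W_def by simp
    qed
    moreover have "(\<lambda>i. c \<otimes> v i) \<in> W" if c: "c \<in> carrier R" and v: "v \<in> W" for c v
    proof -
      have h: "v \<in> vecs R (grid m n)" "\<And>j. (\<lambda>i. v (i,j)) \<in> Ccol"
        "\<And>i. (\<lambda>j. v (i,j)) \<in> Crow" using v unfolding W_def by auto
      have "(\<lambda>i. c \<otimes> v i) \<in> vecs R (grid m n)" by (rule subspace_D(4)[OF vecs_subspace c h(1)])
      moreover have "(\<lambda>i. c \<otimes> v (i,j)) \<in> Ccol" for j by (rule subspace_D(4)[OF s1 c h(2)])
      moreover have "(\<lambda>j. c \<otimes> v (i,j)) \<in> Crow" for i by (rule subspace_D(4)[OF s2 c h(3)])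
      ultimately show ?thesis unfolding W_def by simp
    qed
    ultimately show ?thesis unfolding is_subspace_def by blast
  qed
  have prodW: "{(\<lambda>(i,j). u i \<otimes> v j) | u v. u \<in> Ccol \<and> v \<in> Crow} \<subseteq> W"
  proof
    fix w assume "w \<in> {(\<lambda>(i,j). u i \<otimes> v j) | u v. u \<in> Ccol \<and> v \<in> Crow}"
    then obtain u v where w: "w = (\<lambda>(i,j). u i \<otimes> v j)" "u \<in> Ccol" "v \<in> Crow" by blast
    have cu: "\<And>i. u i \<in> carrier R" using subspace_cvec[OF s1 w(2)] by (simp add: cvec_def)
    have cv: "\<And>i. v i \<in> carrier R" using subspace_cvec[OF s2 w(3)] by (simp add: cvec_def)
    have "w \<in> vecs R (grid m n)"
      using prods_vecs[OF subspace_D(1)[OF s1] subspace_D(1)[OF s2]] w by blast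
    moreover have "(\<lambda>i. w (i,j)) \<in> Ccol" for j
    proof -
      have "(\<lambda>i. v j \<otimes> u i) \<in> Ccol" by (rule subspace_D(4)[OF s1 cv w(2)])
      moreover have "(\<lambda>i. w (i,j)) = (\<lambda>i. v j \<otimes> u i)" using w(1) cu cv by (simp add: m_comm)
      ultimately show ?thesis by simp
    qed
    moreover have "(\<lambda>j. w (i,j)) \<in> Crow" for i
    proof -
      have "(\<lambda>j. u i \<otimes> v j) \<in> Crow" by (rule subspace_D(4)[OF s2 cu w(3)])
      then show ?thesis using w(1) by simp
    qed
    ultimately show "w \<in> W" unfolding W_def by blast
  qed
  have TW: "tensor_code R Ccol Crow \<subseteq> W" unfolding tensor_code_def by (rule span_sub[OF subW prodW])
  have ABg: "A0 \<times> B0 \<subseteq> grid m n" using A0 B0 unfolding grid_def by auto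
  have c1': "\<And>x y. x \<in> Ccol \<Longrightarrow> y \<in> Ccol \<Longrightarrow> \<forall>p\<in>{1..m} - ({1..m} - A0). x p = y p \<Longrightarrow> x = y"
    using c1 unfolding corr'_def by blast
  have c2': "\<And>x y. x \<in> Crow \<Longrightarrow> y \<in> Crow \<Longrightarrow> \<forall>p\<in>{1..n} - ({1..n} - B0). x p = y p \<Longrightarrow> x = y"
    using c2 unfolding corr'_def by blast
  have corrW: "corr' (grid m n) W (grid m n - A0 \<times> B0)"
    unfolding corr'_def
  proof (intro ballI impI)
    fix x y assume x: "x \<in> W" and y: "y \<in> W" and eq: "\<forall>p\<in>grid m n - (grid m n - A0 \<times> B0). x p = y p"
    have eq': "x (i,j) = y (i,j)" if "i \<in> A0" "j \<in> B0" for i j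
    proof -
      have "(i,j) \<in> grid m n - (grid m n - A0 \<times> B0)" using that ABg by auto
      then show ?thesis using eq by blast
    qed
    have rows: "(\<lambda>j. x (i,j)) = (\<lambda>j. y (i,j))" if i: "i \<in> A0" for i
    proof -
      have "(\<lambda>j. x (i,j)) \<in> Crow" "(\<lambda>j. y (i,j)) \<in> Crow" using x y unfolding W_def by auto
      moreover have "\<forall>j\<in>{1..n} - ({1..n} - B0). x (i,j) = y (i,j)" using eq' i by auto
      ultimately show ?thesis by (rule c2')
    qed
    have cols: "(\<lambda>i. x (i,j)) = (\<lambda>i. y (i,j))" for j
    proof -
      have "(\<lambda>i. x (i,j)) \<in> Ccol" "(\<lambda>i. y (i,j)) \<in> Ccol" using x y unfolding W_def by auto
      moreover have "\<forall>i\<in>{1..m} - ({1..m} - A0). x (i,j) = y (i,j)"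
      proof
        fix i assume "i \<in> {1..m} - ({1..m} - A0)"
        then have "i \<in> A0" by auto
        then show "x (i,j) = y (i,j)" using fun_cong[OF rows[of i], of j] by simp
      qed
      ultimately show ?thesis by (rule c1')
    qed
    show "x = y"
    proof
      fix p show "x p = y p" using fun_cong[OF cols[of "snd p"], of "fst p"] by simp
    qed
  qed
  have gAB: "grid m n - (grid m n - A0 \<times> B0) = A0 \<times> B0" using ABg by auto
  have "q ^ card (grid m n - D) \<le> card W"
    by (rule maxcorr_count[OF finite_grid subW _ D nD]) (use U TW in auto)
  also have "\<dots> \<le> q ^ card (grid m n - (grid m n - A0 \<times> B0))"
    by (rule corr_card[OF finite_grid subspace_D(1)[OF subW] corrW])
  also have "\<dots> = q ^ (card A0 * card B0)" using gAB by (simp add: card_cartesian_product)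
  finally show ?thesis by (rule q_pow_le)
qed

lemma lin_comb_zero_at:
  assumes "set cs \<subseteq> carrier R" "length cs = length vs" "\<forall>v\<in>set vs. v p = \<zero>"
  shows "lin_comb R cs vs p = \<zero>"
proof -
  have "lin_comb R cs vs p = (\<Oplus>k\<in>{..<length vs}. \<zero>)"
    unfolding lin_comb_def
  proof (rule finsum_cong')
    fix k assume k: "k \<in> {..<length vs}"
    then have "(vs!k) p = \<zero>" using assms(3) by auto
    moreover have "cs!k \<in> carrier R" using k assms(1,2) by (auto intro!: nth_carrier)
    ultimately show "cs ! k \<otimes> (vs ! k) p = \<zero>" by simp
  qed auto
  then show ?thesis by simp
qed

lemma alg1:
  assumes "f \<in> carrier R" "a \<in> carrier R" "b \<in> carrier R" "X \<in> carrier R" "Y \<in> carrier R"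
  shows "f \<otimes> (a \<ominus> b) \<oplus> (X \<ominus> Y) = (f \<otimes> a \<oplus> X) \<ominus> (f \<otimes> b \<oplus> Y)"
  using assms by (simp add: minus_eq r_distr r_minus minus_add a_ac)

lemma finsum_sub:
  assumes "finite A" "\<forall>p\<in>A. f p \<in> carrier R \<and> x p \<in> carrier R \<and> y p \<in> carrier R"
  shows "(\<Oplus>p\<in>A. f p \<otimes> (x p \<ominus> y p)) = (\<Oplus>p\<in>A. f p \<otimes> x p) \<ominus> (\<Oplus>p\<in>A. f p \<otimes> y p)"
  using assms
proof (induction A rule: finite_induct)
  case empty
  then show ?case by (simp add: minus_eq)
next
  case (insert a A)
  have c1: "(\<Oplus>p\<in>A. f p \<otimes> x p) \<in> carrier R" "(\<Oplus>p\<in>A. f p \<otimes> y p) \<in> carrier R"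
    using insert.prems by (auto intro!: finsum_closed)
  have c2: "f a \<in> carrier R" "x a \<in> carrier R" "y a \<in> carrier R" using insert.prems by auto
  have "(\<Oplus>p\<in>insert a A. f p \<otimes> (x p \<ominus> y p)) = f a \<otimes> (x a \<ominus> y a) \<oplus> (\<Oplus>p\<in>A. f p \<otimes> (x p \<ominus> y p))"
    using insert.hyps insert.prems by (subst finsum_insert) auto
  also have "\<dots> = f a \<otimes> (x a \<ominus> y a) \<oplus> ((\<Oplus>p\<in>A. f p \<otimes> x p) \<ominus> (\<Oplus>p\<in>A. f p \<otimes> y p))"
    using insert.IH insert.prems by simp
  also have "\<dots> = (f a \<otimes> x a \<oplus> (\<Oplus>p\<in>A. f p \<otimes> x p)) \<ominus> (f a \<otimes> y a \<oplus> (\<Oplus>p\<in>A. f p \<otimes> y p))"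
    by (rule alg1[OF c2 c1])
  also have "\<dots> = (\<Oplus>p\<in>insert a A. f p \<otimes> x p) \<ominus> (\<Oplus>p\<in>insert a A. f p \<otimes> y p)"
    using insert.hyps insert.prems by (simp add: finsum_insert)
  finally show ?case .
qed


lemma lc_diag_eval:
  assumes "set e = P" "distinct e" "\<forall>p\<in>P. cvec (z p)"
    "\<And>p p'. p \<in> P \<Longrightarrow> p' \<in> P \<Longrightarrow> p' \<noteq> p \<Longrightarrow> z p p' = \<zero>"
    "c \<in> (\<Pi>\<^sub>E i\<in>P. carrier R)" "p \<in> P"
  shows "lin_comb R (map c e) (map z e) p = c p \<otimes> z p p"
proof -
  obtain k0 where k0: "k0 < length e" "e!k0 = p" using assms(1,6) by (auto simp: in_set_conv_nth)
  have "lin_comb R (map c e) (map z e) (e!k0) = (map c e)!k0 \<otimes> z (e!k0) (e!k0)"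
  proof (rule lin_comb_diag)
    show "set (map c e) \<subseteq> carrier R" using assms(1,5) by auto
    show "\<forall>pa\<in>set e. pa \<noteq> e ! k0 \<longrightarrow> z pa (e ! k0) = \<zero>"
      using assms(1,4,6) k0 by auto
  qed (use assms k0 in auto)
  then show ?thesis using k0 by simp
qed

lemma reduce_core:
  assumes fin: "finite G" and sub: "is_subspace R G L" and EG: "E \<subseteq> G"
    and gc: "\<forall>k<h. \<forall>p\<in>G. g k p \<in> carrier R"
    and cor: "corr' G {x \<in> L. \<forall>k<h. (\<Oplus>p\<in>G. g k p \<otimes> x p) = \<zero>} E"
  shows "\<exists>D\<subseteq>E. card (E - D) \<le> h \<and> corr' G L D"
proof -
  obtain D where D: "D \<subseteq> E" "corr' G L D" "\<forall>p\<in>E-D. \<not> corr' G L (insert p D)"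
    using exists_max_corr[OF fin EG subspace_D(1)[OF sub]] by blast
  have "card (E - D) \<le> h"
  proof (rule ccontr)
    assume "\<not> card (E - D) \<le> h"
    then have "Suc h \<le> card (E - D)" by simp
    then obtain P where P: "P \<subseteq> E - D" "card P = Suc h" "finite P" by (rule obtain_subset_with_card_n)
    have "\<forall>p\<in>P. \<exists>z. z \<in> L \<and> z p \<noteq> \<zero> \<and> (\<forall>p'. p' \<notin> D \<longrightarrow> p' \<noteq> p \<longrightarrow> z p' = \<zero>)"
    proof
      fix p assume "p \<in> P"
      then have "p \<in> E - D" using P by auto
      then show "\<exists>z. z \<in> L \<and> z p \<noteq> \<zero> \<and> (\<forall>p'. p' \<notin> D \<longrightarrow> p' \<noteq> p \<longrightarrow> z p' = \<zero>)"
        using diff_witness[OF sub order_refl D(2)] D(3) by blast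
    qed
    then have "\<exists>z. \<forall>p\<in>P. z p \<in> L \<and> z p p \<noteq> \<zero> \<and> (\<forall>p'. p' \<notin> D \<longrightarrow> p' \<noteq> p \<longrightarrow> z p p' = \<zero>)"
      by (rule bchoice)
    then obtain z where z: "\<forall>p\<in>P. z p \<in> L \<and> z p p \<noteq> \<zero> \<and> (\<forall>p'. p' \<notin> D \<longrightarrow> p' \<noteq> p \<longrightarrow> z p p' = \<zero>)"
      by blast
    obtain e where e: "set e = P" "distinct e" using finite_distinct_list[OF P(3)] by blast
    define F where "F c = lin_comb R (map c e) (map z e)" for c
    define Phi where "Phi c = restrict (\<lambda>k. \<Oplus>p\<in>G. g k p \<otimes> F c p) {..<h}" for c
    have czP: "\<forall>p\<in>P. cvec (z p)" using z subspace_cvec[OF sub] by auto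
    have FL: "F c \<in> L" if "c \<in> (\<Pi>\<^sub>E i\<in>P. carrier R)" for c
      unfolding F_def by (rule subspace_lin_comb[OF sub]) (use that e z in auto)
    have Fc: "F c p \<in> carrier R" if "c \<in> (\<Pi>\<^sub>E i\<in>P. carrier R)" for c p
      using subspace_cvec[OF sub FL[OF that]] by (simp add: cvec_def)
    have zoff: "\<And>p p'. p \<in> P \<Longrightarrow> p' \<in> P \<Longrightarrow> p' \<noteq> p \<Longrightarrow> z p p' = \<zero>"
      using z P(1) by auto
    have Fdiag: "F c p = c p \<otimes> z p p" if "c \<in> (\<Pi>\<^sub>E i\<in>P. carrier R)" "p \<in> P" for c p
      unfolding F_def by (rule lc_diag_eval[OF e czP zoff that])
    have Fzero: "F c p' = \<zero>" if c: "c \<in> (\<Pi>\<^sub>E i\<in>P. carrier R)" and p': "p' \<notin> D" "p' \<notin> P" for c p'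
      unfolding F_def
    proof (rule lin_comb_zero_at)
      show "set (map c e) \<subseteq> carrier R" using c e(1) by auto
      show "\<forall>v\<in>set (map z e). v p' = \<zero>" using z e(1) p' by auto
    qed simp
    have "\<not> inj_on Phi (\<Pi>\<^sub>E i\<in>P. carrier R)"
    proof
      assume inj: "inj_on Phi (\<Pi>\<^sub>E i\<in>P. carrier R)"
      have "card (\<Pi>\<^sub>E i\<in>P. carrier R) \<le> card (\<Pi>\<^sub>E k\<in>{..<h}. carrier R)"
      proof (rule card_inj_on_le[OF inj])
        show "Phi ` (\<Pi>\<^sub>E i\<in>P. carrier R) \<subseteq> (\<Pi>\<^sub>E k\<in>{..<h}. carrier R)"
        proof
          fix w assume "w \<in> Phi ` (\<Pi>\<^sub>E i\<in>P. carrier R)"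
          then obtain c where c: "c \<in> (\<Pi>\<^sub>E i\<in>P. carrier R)" "w = Phi c" by blast
          have "(\<Oplus>p\<in>G. g k p \<otimes> F c p) \<in> carrier R" if "k < h" for k
            using gc that Fc[OF c(1)] by (intro finsum_closed) auto
          then show "w \<in> (\<Pi>\<^sub>E k\<in>{..<h}. carrier R)" using c(2) unfolding Phi_def
            by (simp add: restrict_PiE_iff)
        qed
        show "finite (\<Pi>\<^sub>E k\<in>{..<h}. carrier R)" using finR by (simp add: finite_PiE)
      qed
      then have "q ^ Suc h \<le> q ^ h" using P(2,3) by (simp add: card_PiE)
      then have "Suc h \<le> h" by (rule q_pow_le)
      then show False by simp
    qed
    then have "\<exists>c\<in>(\<Pi>\<^sub>E i\<in>P. carrier R). \<exists>d\<in>(\<Pi>\<^sub>E i\<in>P. carrier R). Phi c = Phi d \<and> c \<noteq> d"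
      unfolding inj_on_def by blast
    then obtain c d where cd: "c \<in> (\<Pi>\<^sub>E i\<in>P. carrier R)" "d \<in> (\<Pi>\<^sub>E i\<in>P. carrier R)" "Phi c = Phi d" "c \<noteq> d"
      by blast
    define w where "w = (\<lambda>i. F c i \<ominus> F d i)"
    have wL: "w \<in> L" unfolding w_def by (rule subspace_diff[OF sub FL[OF cd(1)] FL[OF cd(2)]])
    have gw: "(\<Oplus>p\<in>G. g k p \<otimes> w p) = \<zero>" if k: "k < h" for k
    proof -
      have "(\<Oplus>p\<in>G. g k p \<otimes> w p) = (\<Oplus>p\<in>G. g k p \<otimes> F c p) \<ominus> (\<Oplus>p\<in>G. g k p \<otimes> F d p)"
        unfolding w_def by (rule finsum_sub[OF fin]) (use gc k Fc[OF cd(1)] Fc[OF cd(2)] in auto)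
      moreover have "(\<Oplus>p\<in>G. g k p \<otimes> F c p) = (\<Oplus>p\<in>G. g k p \<otimes> F d p)"
        using fun_cong[OF cd(3), of k] k unfolding Phi_def by simp
      moreover have "(\<Oplus>p\<in>G. g k p \<otimes> F d p) \<in> carrier R"
        using gc k Fc[OF cd(2)] by (intro finsum_closed) auto
      ultimately show ?thesis by (simp add: minus_self)
    qed
    have zC: "(\<lambda>_. \<zero>) \<in> {x \<in> L. \<forall>k<h. (\<Oplus>p\<in>G. g k p \<otimes> x p) = \<zero>}"
    proof -
      have "(\<Oplus>p\<in>G. g k p \<otimes> \<zero>) = \<zero>" if "k < h" for k
      proof -
        have "(\<Oplus>p\<in>G. g k p \<otimes> \<zero>) = (\<Oplus>p\<in>G. \<zero>)"
          using gc that by (intro finsum_cong') auto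
        then show ?thesis by simp
      qed
      then show ?thesis using subspace_D(2)[OF sub] by simp
    qed
    have wC: "w \<in> {x \<in> L. \<forall>k<h. (\<Oplus>p\<in>G. g k p \<otimes> x p) = \<zero>}" using wL gw by simp
    have agree: "\<forall>p\<in>G - E. w p = \<zero>"
    proof
      fix p assume "p \<in> G - E"
      then have "p \<notin> D" "p \<notin> P" using D(1) P(1) by auto
      then have "F c p = \<zero>" "F d p = \<zero>" using Fzero[OF cd(1)] Fzero[OF cd(2)] by auto
      then show "w p = \<zero>" unfolding w_def by (simp add: minus_eq)
    qed
    have cor': "\<And>x y. x \<in> {x \<in> L. \<forall>k<h. (\<Oplus>p\<in>G. g k p \<otimes> x p) = \<zero>} \<Longrightarrow>
        y \<in> {x \<in> L. \<forall>k<h. (\<Oplus>p\<in>G. g k p \<otimes> x p) = \<zero>} \<Longrightarrow> \<forall>p\<in>G - E. x p = y p \<Longrightarrow> x = y"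
      using cor unfolding corr'_def by blast
    have w0: "w = (\<lambda>_. \<zero>)" by (rule cor'[OF wC zC]) (use agree in simp)
    have "\<exists>p\<in>P. c p \<noteq> d p"
    proof (rule ccontr)
      assume "\<not> (\<exists>p\<in>P. c p \<noteq> d p)"
      then have "c = d" by (intro PiE_ext[OF cd(1) cd(2)]) auto
      then show False using cd(4) by simp
    qed
    then obtain p where p: "p \<in> P" "c p \<noteq> d p" by blast
    have "F c p \<ominus> F d p = \<zero>" using fun_cong[OF w0, of p] unfolding w_def by simp
    then have "F c p = F d p" by (rule minus_zero_eq[OF Fc[OF cd(1)] Fc[OF cd(2)]])
    then have "c p \<otimes> z p p = d p \<otimes> z p p" using Fdiag[OF cd(1) p(1)] Fdiag[OF cd(2) p(1)] by simp
    moreover have "z p p \<in> carrier R" "z p p \<noteq> \<zero>" using czP z p(1) by (auto simp: cvec_def)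
    moreover have "c p \<in> carrier R" "d p \<in> carrier R" using cd(1,2) p(1) by auto
    ultimately have "c p = d p" using m_rcancel[of "z p p" "c p" "d p"] by simp
    then show False using p(2) by simp
  qed
  then show ?thesis using D by blast
qed

lemma extend_core:
  assumes fin: "finite G" and sub: "is_subspace R G L" and cor: "corr' G L E'"
    and I: "I \<subseteq> G - E'" and e: "set e = I" "distinct e"
  shows "corr' G {x \<in> L. \<forall>k<length e. (\<Oplus>p\<in>G. (if p = e!k then \<one> else \<zero>) \<otimes> x p) = \<zero>} (E' \<union> I)"
proof -
  have ev: "(\<Oplus>p\<in>G. (if p = e!k then \<one> else \<zero>) \<otimes> x p) = x (e!k)" if x: "x \<in> L" and k: "k < length e" for x k
  proof -
    have cx: "\<And>p. x p \<in> carrier R" using subspace_cvec[OF sub x] by (simp add: cvec_def)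
    have ekG: "e!k \<in> G" using k e(1) I nth_mem by blast
    have "(\<Oplus>p\<in>G. (if p = e!k then \<one> else \<zero>) \<otimes> x p) = (\<Oplus>p\<in>G. if e!k = p then x p else \<zero>)"
      using cx by (intro finsum_cong') auto
    also have "\<dots> = x (e!k)" using ekG fin cx by (intro finsum_singleton) auto
    finally show ?thesis .
  qed
  have cor': "\<And>x y. x \<in> L \<Longrightarrow> y \<in> L \<Longrightarrow> \<forall>p\<in>G - E'. x p = y p \<Longrightarrow> x = y"
    using cor unfolding corr'_def by blast
  show ?thesis
    unfolding corr'_def
  proof (intro ballI impI)
    fix x y
    assume x: "x \<in> {x \<in> L. \<forall>k<length e. (\<Oplus>p\<in>G. (if p = e!k then \<one> else \<zero>) \<otimes> x p) = \<zero>}"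
      and y: "y \<in> {x \<in> L. \<forall>k<length e. (\<Oplus>p\<in>G. (if p = e!k then \<one> else \<zero>) \<otimes> x p) = \<zero>}"
      and eq: "\<forall>p\<in>G - (E' \<union> I). x p = y p"
    have xL: "x \<in> L" and yL: "y \<in> L" using x y by auto
    have "\<forall>p\<in>G - E'. x p = y p"
    proof
      fix p assume p: "p \<in> G - E'"
      show "x p = y p"
      proof (cases "p \<in> I")
        case True
        then obtain k where k: "k < length e" "p = e!k" using e(1) by (auto simp: in_set_conv_nth)
        have "x p = \<zero>" using x ev[OF xL k(1)] k by auto
        moreover have "y p = \<zero>" using y ev[OF yL k(1)] k by auto
        ultimately show ?thesis by simp
      next
        case False
        then show ?thesis using eq p by auto
      qed
    qed
    then show "x = y" by (rule cor'[OF xL yL])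
  qed
qed


end

lemma FF_intro: "field R \<Longrightarrow> finite (carrier R) \<Longrightarrow> FF R"
  by (simp add: FF_def FF_axioms_def)

lemma topo0:
  "topo_code R m n a b 0 C \<longleftrightarrow>
   (\<exists>Ccol Crow. lin_code R {1..m} (m-a) Ccol \<and> lin_code R {1..n} (n-b) Crow \<and> C = tensor_code R Ccol Crow)"
proof
  assume "topo_code R m n a b 0 C"
  then show "\<exists>Ccol Crow. lin_code R {1..m} (m-a) Ccol \<and> lin_code R {1..n} (n-b) Crow \<and> C = tensor_code R Ccol Crow"
    unfolding topo_code_def by auto
next
  assume "\<exists>Ccol Crow. lin_code R {1..m} (m-a) Ccol \<and> lin_code R {1..n} (n-b) Crow \<and> C = tensor_code R Ccol Crow"
  then obtain Ccol Crow where h: "lin_code R {1..m} (m-a) Ccol" "lin_code R {1..n} (n-b) Crow" "C = tensor_code R Ccol Crow"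
    by blast
  have "C = {x \<in> tensor_code R Ccol Crow. \<forall>k<(0::nat). (\<Oplus>\<^bsub>R\<^esub>p\<in>grid m n. (\<lambda>_ _. \<zero>\<^bsub>R\<^esub>) k p \<otimes>\<^bsub>R\<^esub> x p) = \<zero>\<^bsub>R\<^esub>}"
    using h(3) by simp
  then show "topo_code R m n a b 0 C" unfolding topo_code_def using h(1,2)
    by (intro exI[of _ Ccol] exI[of _ Crow] exI[of _ "\<lambda>_ _. \<zero>\<^bsub>R\<^esub>"]) simp
qed

lemma corrects_iff: "corrects C m n E = corr' (grid m n) C E"
  by (simp add: corrects_def corr'_def)

lemma correctable_sub: "correctable m n a b h E \<Longrightarrow> E \<subseteq> grid m n"
  unfolding correctable_def by blast

lemma correctable0I:
  assumes "E \<subseteq> grid m n" "field R" "finite (carrier R)" "lin_code R {1..m} (m-a) Ccol"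
    "lin_code R {1..n} (n-b) Crow" "corr' (grid m n) (tensor_code R Ccol Crow) E"
  shows "correctable m n a b 0 E"
proof -
  have "topo_code R m n a b 0 (tensor_code R Ccol Crow)" using topo0 assms(4,5) by blast
  then show ?thesis unfolding correctable_def using assms corrects_iff by blast
qed

lemma corr0_size:
  assumes "correctable m n a b 0 D"
  shows "(m-a)*(n-b) \<le> card (grid m n - D)"
proof -
  obtain R :: "nat ring" and C where R: "field R" "finite (carrier R)" "topo_code R m n a b 0 C" "corrects C m n D"
    using assms unfolding correctable_def by blast
  interpret FF R by (rule FF_intro[OF R(1,2)])
  obtain Ccol Crow where c: "lin_code R {1..m} (m-a) Ccol" "lin_code R {1..n} (n-b) Crow" "C = tensor_code R Ccol Crow"
    using R(3) topo0 by blast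
  show ?thesis by (rule tensor_lower[OF c(1,2)]) (use R(4) c(3) corrects_iff in simp)
qed

lemma max0_size:
  assumes "max_correctable m n a b 0 E"
  shows "card (grid m n - E) \<le> (m-a)*(n-b)"
proof -
  have corrE: "correctable m n a b 0 E" and nomax: "\<not> (\<exists>E'. correctable m n a b 0 E' \<and> E \<subset> E')"
    using assms unfolding max_correctable_def by auto
  obtain R :: "nat ring" and C where R: "field R" "finite (carrier R)" "topo_code R m n a b 0 C" "corrects C m n E"
    using corrE unfolding correctable_def by blast
  have EG: "E \<subseteq> grid m n" by (rule correctable_sub[OF corrE])
  interpret FF R by (rule FF_intro[OF R(1,2)])
  obtain Ccol Crow where c: "lin_code R {1..m} (m-a) Ccol" "lin_code R {1..n} (n-b) Crow" "C = tensor_code R Ccol Crow"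
    using R(3) topo0 by blast
  obtain Ccol' A0 where s1: "Ccol' \<subseteq> Ccol" "lin_code R {1..m} (m-a) Ccol'" "A0 \<subseteq> {1..m}" "card A0 = m - a"
     "corr' {1..m} Ccol' ({1..m} - A0)"
    using shrink[OF _ c(1)] by auto
  obtain Crow' B0 where s2: "Crow' \<subseteq> Crow" "lin_code R {1..n} (n-b) Crow'" "B0 \<subseteq> {1..n}" "card B0 = n - b"
     "corr' {1..n} Crow' ({1..n} - B0)"
    using shrink[OF _ c(2)] by auto
  define L' where "L' = tensor_code R Ccol' Crow'"
  have "{(\<lambda>(i,j). u i \<otimes>\<^bsub>R\<^esub> v j) | u v. u \<in> Ccol' \<and> v \<in> Crow'} \<subseteq> {(\<lambda>(i,j). u i \<otimes>\<^bsub>R\<^esub> v j) | u v. u \<in> Ccol \<and> v \<in> Crow}"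
    using s1(1) s2(1) by blast
  then have L'C: "L' \<subseteq> C" unfolding L'_def c(3) tensor_code_def by (rule span_mono)
  have corrL': "corr' (grid m n) L' E" using corr_mono[OF L'C] R(4) corrects_iff by blast
  have nD: "\<not> corr' (grid m n) L' (insert p E)" if p: "p \<in> grid m n - E" for p
  proof
    assume "corr' (grid m n) L' (insert p E)"
    then have "correctable m n a b 0 (insert p E)"
      using correctable0I[OF _ R(1,2) s1(2) s2(2)] EG p unfolding L'_def by blast
    moreover have "E \<subset> insert p E" using p by auto
    ultimately show False using nomax by blast
  qed
  have sub1: "is_subspace R {1..m} Ccol'" and sub2: "is_subspace R {1..n} Crow'"
    using s1(2) s2(2) unfolding lin_code_def by auto
  have "card (grid m n - E) \<le> card A0 * card B0"
    by (rule tensor_upper[OF sub1 sub2 s1(3) s2(3) s1(5) s2(5) _ EG corrL' nD]) (simp_all add: L'_def)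
  then show ?thesis using s1(4) s2(4) by simp
qed

lemma reduce:
  assumes "correctable m n a b h E"
  shows "\<exists>D\<subseteq>E. card (E - D) \<le> h \<and> correctable m n a b 0 D"
proof -
  obtain R :: "nat ring" and C where R: "field R" "finite (carrier R)" "topo_code R m n a b h C" "corrects C m n E"
    using assms unfolding correctable_def by blast
  have EG: "E \<subseteq> grid m n" by (rule correctable_sub[OF assms])
  interpret FF R by (rule FF_intro[OF R(1,2)])
  obtain Ccol Crow g where c: "lin_code R {1..m} (m-a) Ccol" "lin_code R {1..n} (n-b) Crow"
    "\<forall>k<h. \<forall>p\<in>grid m n. g k p \<in> carrier R"
    "C = {x \<in> tensor_code R Ccol Crow. \<forall>k<h. (\<Oplus>\<^bsub>R\<^esub>p\<in>grid m n. g k p \<otimes>\<^bsub>R\<^esub> x p) = \<zero>\<^bsub>R\<^esub>}"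
    using R(3) unfolding topo_code_def by blast
  have sub1: "is_subspace R {1..m} Ccol" and sub2: "is_subspace R {1..n} Crow"
    using c(1,2) unfolding lin_code_def by auto
  obtain D where D: "D \<subseteq> E" "card (E - D) \<le> h" "corr' (grid m n) (tensor_code R Ccol Crow) D"
    using reduce_core[OF finite_grid tensor_sub[OF sub1 sub2] EG c(3)] R(4) c(4) corrects_iff by blast
  have "correctable m n a b 0 D"
    by (rule correctable0I[OF _ R(1,2) c(1,2) D(3)]) (use D(1) EG in auto)
  then show ?thesis using D by blast
qed

lemma extend:
  assumes "correctable m n a b 0 E'" "I \<subseteq> grid m n - E'" "card I = h"
  shows "correctable m n a b h (E' \<union> I)"
proof -
  obtain R :: "nat ring" and C where R: "field R" "finite (carrier R)" "topo_code R m n a b 0 C" "corrects C m n E'"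
    using assms(1) unfolding correctable_def by blast
  have EG: "E' \<subseteq> grid m n" by (rule correctable_sub[OF assms(1)])
  interpret FF R by (rule FF_intro[OF R(1,2)])
  obtain Ccol Crow where c: "lin_code R {1..m} (m-a) Ccol" "lin_code R {1..n} (n-b) Crow" "C = tensor_code R Ccol Crow"
    using R(3) topo0 by blast
  have sub1: "is_subspace R {1..m} Ccol" and sub2: "is_subspace R {1..n} Crow"
    using c(1,2) unfolding lin_code_def by auto
  have "finite I" using assms(2) finite_grid finite_subset by blast
  then obtain e where e: "set e = I" "distinct e" using finite_distinct_list by blast
  have le: "length e = h" using distinct_card[OF e(2)] e(1) assms(3) by simp
  define g where "g = (\<lambda>k p. if p = e!k then \<one>\<^bsub>R\<^esub> else \<zero>\<^bsub>R\<^esub>)"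
  have cor: "corr' (grid m n) {x \<in> tensor_code R Ccol Crow. \<forall>k<length e. (\<Oplus>\<^bsub>R\<^esub>p\<in>grid m n. g k p \<otimes>\<^bsub>R\<^esub> x p) = \<zero>\<^bsub>R\<^esub>} (E' \<union> I)"
    unfolding g_def
    by (rule extend_core[OF finite_grid tensor_sub[OF sub1 sub2] _ assms(2) e]) (use R(4) c(3) corrects_iff in simp)
  have "topo_code R m n a b h {x \<in> tensor_code R Ccol Crow. \<forall>k<h. (\<Oplus>\<^bsub>R\<^esub>p\<in>grid m n. g k p \<otimes>\<^bsub>R\<^esub> x p) = \<zero>\<^bsub>R\<^esub>}"
    unfolding topo_code_def
    by (intro exI[of _ Ccol] exI[of _ Crow] exI[of _ g]) (use c(1,2) in \<open>simp add: g_def\<close>)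
  moreover have "E' \<union> I \<subseteq> grid m n" using EG assms(2) by auto
  ultimately show ?thesis unfolding correctable_def using R(1,2) cor le corrects_iff by blast
qed


theorem theorem2:
  fixes m n a b h :: nat
  assumes "a < m" and "b < n"
    and "h \<le> (m - a) * (n - b) - max (m - a) (n - b)"
  shows "{E. max_correctable m n a b h E} =
         {E' \<union> I | E' I. max_correctable m n a b 0 E' \<and> I \<subseteq> grid m n - E' \<and> card I = h}"
proof -
  have hK: "h \<le> (m - a) * (n - b)" using assms(3) by simp
  have finG: "finite (grid m n)" by (rule finite_grid)
  show ?thesis
  proof (intro equalityI subsetI)
    fix E assume "E \<in> {E. max_correctable m n a b h E}"
    then have mE: "max_correctable m n a b h E" by simp
    have cE: "correctable m n a b h E" and nmE: "\<not> (\<exists>E'. correctable m n a b h E' \<and> E \<subset> E')"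
      using mE unfolding max_correctable_def by auto
    have EG: "E \<subseteq> grid m n" by (rule correctable_sub[OF cE])
    obtain D where D: "D \<subseteq> E" "card (E - D) \<le> h" "correctable m n a b 0 D" using reduce[OF cE] by blast
    have DG: "D \<subseteq> grid m n" using D(1) EG by auto
    obtain E' where E': "D \<subseteq> E'" "E' \<subseteq> grid m n" "correctable m n a b 0 E'"
      "\<forall>T'. E' \<subset> T' \<longrightarrow> T' \<subseteq> grid m n \<longrightarrow> \<not> correctable m n a b 0 T'"
      using finite_maximal_superset[OF finG DG, of "correctable m n a b 0", OF D(3)] by blast
    have "\<not> (\<exists>E''. correctable m n a b 0 E'' \<and> E' \<subset> E'')"
    proof
      assume "\<exists>E''. correctable m n a b 0 E'' \<and> E' \<subset> E''"
      then obtain E'' where E'': "correctable m n a b 0 E''" "E' \<subset> E''" by blast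
      have "E'' \<subseteq> grid m n" by (rule correctable_sub[OF E''(1)])
      then show False using E'(4) E'' by simp
    qed
    then have mE': "max_correctable m n a b 0 E'"
      unfolding max_correctable_def using E'(3) by simp
    have s1: "(m - a) * (n - b) \<le> card (grid m n - E')" by (rule corr0_size[OF E'(3)])
    have finE: "finite E" using EG finG finite_subset by blast
    have "E - E' \<subseteq> E - D" using E'(1) by auto
    then have "card (E - E') \<le> card (E - D)" using finE by (intro card_mono) auto
    then have cEE: "card (E - E') \<le> h" using D(2) by simp
    have sub: "E - E' \<subseteq> grid m n - E'" using EG by auto
    have finGE: "finite (grid m n - E')" using finG by simp
    have "card ((grid m n - E') - (E - E')) = card (grid m n - E') - card (E - E')"
      using sub finGE finite_subset by (intro card_Diff_subset) auto
    then have "h - card (E - E') \<le> card ((grid m n - E') - (E - E'))" using s1 hK by linarith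
    then obtain J where J: "J \<subseteq> (grid m n - E') - (E - E')" "card J = h - card (E - E')" "finite J"
      by (rule obtain_subset_with_card_n)
    define I where "I = (E - E') \<union> J"
    have I: "I \<subseteq> grid m n - E'" using J(1) sub unfolding I_def by auto
    have "card I = card (E - E') + card J"
      unfolding I_def using J finE by (intro card_Un_disjoint) auto
    then have cI: "card I = h" using J(2) cEE by simp
    have cEI: "correctable m n a b h (E' \<union> I)" by (rule extend[OF E'(3) I cI])
    have "E \<subseteq> E' \<union> I" unfolding I_def by auto
    have EEI: "E = E' \<union> I"
    proof (rule ccontr)
      assume "E \<noteq> E' \<union> I"
      then have "E \<subset> E' \<union> I" using \<open>E \<subseteq> E' \<union> I\<close> by (simp add: psubset_eq)
      then show False using nmE cEI by blast
    qed
    show "E \<in> {E' \<union> I | E' I. max_correctable m n a b 0 E' \<and> I \<subseteq> grid m n - E' \<and> card I = h}"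
      unfolding mem_Collect_eq
      by (rule exI[of _ E'], rule exI[of _ I]) (simp add: EEI mE' I cI)
  next
    fix E assume "E \<in> {E' \<union> I | E' I. max_correctable m n a b 0 E' \<and> I \<subseteq> grid m n - E' \<and> card I = h}"
    then obtain E' I where hE: "E = E' \<union> I" "max_correctable m n a b 0 E'" "I \<subseteq> grid m n - E'" "card I = h"
      by blast
    have cE': "correctable m n a b 0 E'" using hE(2) unfolding max_correctable_def by blast
    have cE: "correctable m n a b h E" using extend[OF cE' hE(3,4)] hE(1) by simp
    have E'G: "E' \<subseteq> grid m n" by (rule correctable_sub[OF cE'])
    have "\<not> (\<exists>E''. correctable m n a b h E'' \<and> E \<subset> E'')"
    proof
      assume "\<exists>E''. correctable m n a b h E'' \<and> E \<subset> E''"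
      then obtain E'' where E'': "correctable m n a b h E''" "E \<subset> E''" by blast
      have E''G: "E'' \<subseteq> grid m n" by (rule correctable_sub[OF E''(1)])
      obtain D where D: "D \<subseteq> E''" "card (E'' - D) \<le> h" "correctable m n a b 0 D"
        using reduce[OF E''(1)] by blast
      have c1: "(m - a) * (n - b) \<le> card (grid m n - D)" by (rule corr0_size[OF D(3)])
      have c2: "card (grid m n - E') \<le> (m - a) * (n - b)" by (rule max0_size[OF hE(2)])
      have fin'': "finite E''" using E''G finG finite_subset by blast
      have finD: "finite D" using D(1) fin'' finite_subset by blast
      have e1: "card (grid m n - D) = card (grid m n) - card D"
        using D(1) E''G finD by (intro card_Diff_subset) auto
      have e2: "card (grid m n - E') = card (grid m n) - card E'"
        using E'G finG finite_subset by (intro card_Diff_subset) auto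
      have e3: "card (E'' - D) = card E'' - card D" using D(1) finD by (intro card_Diff_subset) auto
      have e3': "card D \<le> card E''" using D(1) fin'' by (intro card_mono) auto
      have e4: "card E < card E''" using E''(2) fin'' by (intro psubset_card_mono) auto
      have finI: "finite I" using hE(3) finG finite_subset by blast
      have disj: "E' \<inter> I = {}" using hE(3) by auto
      have finE': "finite E'" using E'G finG finite_subset by blast
      have "card (E' \<union> I) = card E' + card I" by (rule card_Un_disjoint[OF finE' finI disj])
      then have e5: "card E = card E' + h" using hE(1,4) by simp
      have e6: "card E'' \<le> card (grid m n)" using E''G finG by (intro card_mono) auto
      show False using c1 c2 e1 e2 e3 e3' e4 e5 e6 D(2) by linarith
    qed
    then show "E \<in> {E. max_correctable m n a b h E}" using cE unfolding max_correctable_def by simp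
  qed
qed

end
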